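(* Let $\nu$ be a signature and let $\mathcal A\in\widetilde{\mathrm{Hinge}}_n$ be a nondegenerate element lying over the canonical hinge $\mathcal P_{\alpha_1,\dots,\alpha_k}$. Then $\rho_\nu(\mathcal A)\Xi_\nu=c\,\Xi_\nu$ for some $c\in\mathbb C^*$.
   Context: Let $V=\mathbb C^n$ with basis $e_1,\dots,e_n$. A linear relation is a subspace $P\subset V\oplus V$; $\mathrm{Ker}\,P=\{v: v\oplus0\in P\}$, $\mathrm{Dom}\,P,\mathrm{Im}\,P$ the projections to the first and second summands, $\mathrm{Indef}\,P=\{w:0\oplus w\in P\}$, $\mathrm{rk}\,P=\dim\mathrm{Dom}\,P-\dim\mathrm{Ker}\,P$. If $\dim P=n$, choose bases $f_1,\dots,f_a,g_1,\dots,g_b,h_1,\dots,h_c$ and $F_1,\dots,F_a,G_1,\dots,G_b,H_1,\dots,H_c$ of $V$ with $P$ spanned by $0\oplus F_i$, $g_j\oplus G_j$, $h_k\oplus0$; $\lambda(P)$ maps $f_1\wedge\dots\wedge f_a\wedge g_{i_1}\wedge\dots\wedge g_{i_s}$ to $F_1\wedge\dots\wedge F_a\wedge G_{i_1}\wedge\dots\wedge G_{i_s}$ and kills the other basis monomials (up to scalar); $\lambda^m(P)$ its restriction to $\Lambda^mV$. A hinge is a sequence $\mathcal P=(P_1,\dots,P_k)$ of $n$-dimensional relations with $\mathrm{Ker}\,P_j=\mathrm{Dom}\,P_{j+1}$, $\mathrm{Im}\,P_j=\mathrm{Indef}\,P_{j+1}$, $\mathrm{Dom}\,P_1=V$, $\mathrm{Im}\,P_k=V$,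 $\mathrm{rk}\,P_j>0$. For each $m$ there is a nonzero $\lambda^m(P_j)$, and any two nonzero ones are proportional; $\lambda^m(\mathcal P)$ denotes it (up to scalar). $\mathcal A$ lies over $\mathcal P$ if $\mathcal A=(c_0\lambda^0(\mathcal P),\dots,c_n\lambda^n(\mathcal P))$ with $c_j\in\mathbb C$; it is nondegenerate if all $c_j\ne0$; $\widetilde{\mathrm{Hinge}}_n$ is the set of all such tuples. For positive integers $\alpha_1,\dots,\alpha_k$ with sum $n$, the canonical hinge $\mathcal P_{\alpha_1,\dots,\alpha_k}=(P_1,\dots,P_k)$ has $P_j$ spanned by $0\oplus e_\sigma$ for $\sigma\le\alpha_1+\dots+\alpha_{j-1}$, by $e_t\oplus e_t$ for $\alpha_1+\dots+\alpha_{j-1}<t\le\alpha_1+\dots+\alpha_j$, and by $e_\mu\oplus0$ for $\mu>\alpha_1+\dots+\alpha_j$. A signature is $\nu_1\ge\dots\ge\nu_n\ge0$ (integers), $\nu_{n+1}=0$; $\mathfrak H_\nu=\bigotimes_j(\Lambda^jV)^{\otimes(\nu_j-\nu_{j+1})}$; $\Xi_\nu=\bigotimes_j(e_1\wedge\dots\wedge e_j)^{\otimes(\nu_j-\nu_{j+1})}$; $\mathfrak r_\nu(A_0,\dots,A_n)=\bigotimes_jA_j^{\otimes(\nu_j-\nu_{j+1})}$; $H_\nu$ is the span of $\mathfrak r_\nu(\lambda^0_{\mathrm{cha}}(g),\dots,\lambda^n_{\mathrm{cha}}(g))\Xi_\nu$, $g\in\mathrm{GL}_n(\mathbb C)$,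 where $\lambda^j_{\mathrm{cha}}(g)v_1\wedge\dots\wedge v_j=gv_1\wedge\dots\wedge gv_j$; $H_\nu$ is invariant under $\mathfrak r_\nu(\mathcal A)$ for $\mathcal A\in\widetilde{\mathrm{Hinge}}_n$, and $\rho_\nu(\mathcal A)$ is the restriction of $\mathfrak r_\nu(\mathcal A)$ to $H_\nu$. *)

theory Defs
  imports Complex_Main "HOL-Combinatorics.Permutations"
begin

text \<open>V = C^n: vectors are functions nat \<Rightarrow> complex supported on {1..n};
 e_i is the standard basis vector. V \<oplus> V is encoded as (nat + nat) \<Rightarrow> complex.\<close>

definition Vn :: "nat \<Rightarrow> (nat \<Rightarrow> complex) set" where
  "Vn n = {v. \<forall>i. v i \<noteq> 0 \<longrightarrow> i \<in> {1..n}}"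

definition evec :: "nat \<Rightarrow> nat \<Rightarrow> complex" where
  "evec i = (\<lambda>x. if x = i then 1 else 0)"

definition dsum :: "(nat \<Rightarrow> complex) \<Rightarrow> (nat \<Rightarrow> complex) \<Rightarrow> (nat + nat \<Rightarrow> complex)" where
  "dsum v w = case_sum v w"

definition lspan :: "('a \<Rightarrow> complex) list \<Rightarrow> ('a \<Rightarrow> complex) set" where
  "lspan vs = {u. \<exists>c. u = (\<lambda>x. \<Sum>i<length vs. c i * (vs ! i) x)}"

definition cspan :: "('a \<Rightarrow> complex) set \<Rightarrow> ('a \<Rightarrow> complex) set" where
  "cspan S = {u. \<exists>F c. finite F \<and> F \<subseteq> S \<and> u = (\<lambda>x. \<Sum>w\<in>F. c w * w x)}"

definition lin_indep :: "('a \<Rightarrow> complex) list \<Rightarrow> bool" where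
  "lin_indep vs \<longleftrightarrow> (\<forall>c. (\<forall>x. (\<Sum>i<length vs. c i * (vs ! i) x) = 0) \<longrightarrow> (\<forall>i<length vs. c i = 0))"

definition is_basis :: "nat \<Rightarrow> (nat \<Rightarrow> complex) list \<Rightarrow> bool" where
  "is_basis n vs \<longleftrightarrow> length vs = n \<and> set vs \<subseteq> Vn n \<and> lin_indep vs"

text \<open>Exterior powers: Lambda^m V has basis e_I = e_{i_1} \<and> ... \<and> e_{i_m}, I an m-subset of {1..n}
  (i_1 < ... < i_m). An element is a coefficient function nat set \<Rightarrow> complex supported on msub n m.
  An operator on Lambda^m V is a matrix L J I (coefficient of e_J in the image of e_I).\<close>

definition msub :: "nat \<Rightarrow> nat \<Rightarrow> nat set set" where
  "msub n m = {I. I \<subseteq> {1..n} \<and> card I = m}"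

text \<open>coordinates of v_1 \<and> ... \<and> v_m in the basis e_J\<close>
definition wedge :: "(nat \<Rightarrow> complex) list \<Rightarrow> nat set \<Rightarrow> complex" where
  "wedge vs J = (if finite J \<and> card J = length vs then
      (\<Sum>p | p permutes {..<length vs}. of_int (sign p) *
          (\<Prod>k<length vs. (vs ! k) (sorted_list_of_set J ! p k)))
    else 0)"

definition mat_apply :: "nat \<Rightarrow> nat \<Rightarrow> (nat set \<Rightarrow> nat set \<Rightarrow> complex) \<Rightarrow> (nat set \<Rightarrow> complex) \<Rightarrow> (nat set \<Rightarrow> complex)" where
  "mat_apply n m L w = (\<lambda>J. \<Sum>I\<in>msub n m. L J I * w I)"

definition is_op :: "nat \<Rightarrow> nat \<Rightarrow> (nat set \<Rightarrow> nat set \<Rightarrow> complex) \<Rightarrow> bool" where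
  "is_op n m L \<longleftrightarrow> (\<forall>J I. L J I \<noteq> 0 \<longrightarrow> J \<in> msub n m \<and> I \<in> msub n m)"

text \<open>lam_rep n P m L: L is (a representative, for one choice of adapted bases, of) lambda^m(P).
  P is spanned by 0\<oplus>F_i, g_j\<oplus>G_j, h_k\<oplus>0, where f@g@h and F@G@H are bases of V;
  lambda(P) sends f_1\<and>..\<and>f_a\<and>g_{i_1}\<and>..\<and>g_{i_s} to F_1\<and>..\<and>F_a\<and>G_{i_1}\<and>..\<and>G_{i_s}
  and kills all other basis monomials.\<close>
definition lam_rep :: "nat \<Rightarrow> (nat + nat \<Rightarrow> complex) set \<Rightarrow> nat \<Rightarrow> (nat set \<Rightarrow> nat set \<Rightarrow> complex) \<Rightarrow> bool" where
  "lam_rep n P m L \<longleftrightarrow>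
    (\<exists>fs gs hs Fs Gs Hs.
       is_basis n (fs @ gs @ hs) \<and> is_basis n (Fs @ Gs @ Hs) \<and>
       length fs = length Fs \<and> length gs = length Gs \<and> length hs = length Hs \<and>
       P = lspan (map (dsum (\<lambda>_. 0)) Fs @ map2 dsum gs Gs @ map (\<lambda>h. dsum h (\<lambda>_. 0)) hs) \<and>
       is_op n m L \<and>
       (\<forall>S. S \<subseteq> {..<n} \<and> card S = m \<longrightarrow>
          mat_apply n m L (wedge (map (\<lambda>i. (fs @ gs @ hs) ! i) (sorted_list_of_set S))) =
            (if {..<length fs} \<subseteq> S \<and> S \<subseteq> {..<length fs + length gs}
             then wedge (map (\<lambda>i. (Fs @ Gs) ! i) (sorted_list_of_set S))
             else (\<lambda>_. 0))))"

definition psum :: "nat list \<Rightarrow> nat \<Rightarrow> nat" where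
  "psum alpha j = sum_list (take j alpha)"

definition cvec :: "nat \<Rightarrow> nat \<Rightarrow> nat \<Rightarrow> (nat + nat \<Rightarrow> complex)" where
  "cvec s0 s1 i = (if i \<le> s0 then dsum (\<lambda>_. 0) (evec i)
                   else if i \<le> s1 then dsum (evec i) (evec i)
                   else dsum (evec i) (\<lambda>_. 0))"

definition canon_hinge :: "nat \<Rightarrow> nat list \<Rightarrow> (nat + nat \<Rightarrow> complex) set list" where
  "canon_hinge n alpha =
     map (\<lambda>j. lspan (map (cvec (psum alpha (j - 1)) (psum alpha j)) [1..<n+1])) [1..<length alpha + 1]"

definition lies_over_nondeg :: "nat \<Rightarrow> (nat \<Rightarrow> nat set \<Rightarrow> nat set \<Rightarrow> complex) \<Rightarrow> (nat + nat \<Rightarrow> complex) set list \<Rightarrow> bool" where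
  "lies_over_nondeg n A Ps \<longleftrightarrow>
     (\<forall>m\<le>n. \<exists>P\<in>set Ps. \<exists>L. lam_rep n P m L \<and> L \<noteq> (\<lambda>_ _. 0) \<and>
        (\<exists>c. c \<noteq> 0 \<and> A m = (\<lambda>J I. c * L J I)))"

text \<open>Signature nu = (nu_1,...,nu_n), nu_{n+1} = 0. The tensor product H_nu is modelled with slots
  (the list of exterior degrees j, each repeated nu_j - nu_{j+1} times, j = 1..n);
  a tensor is a coefficient function on index lists.\<close>
definition mult :: "nat \<Rightarrow> (nat \<Rightarrow> nat) \<Rightarrow> nat \<Rightarrow> nat" where
  "mult n nu j = nu j - (if Suc j \<le> n then nu (Suc j) else 0)"

definition slots :: "nat \<Rightarrow> (nat \<Rightarrow> nat) \<Rightarrow> nat list" where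
  "slots n nu = concat (map (\<lambda>j. replicate (mult n nu j) j) [1..<n+1])"

definition tidx :: "nat \<Rightarrow> (nat \<Rightarrow> nat) \<Rightarrow> nat set list set" where
  "tidx n nu = {Is. length Is = length (slots n nu) \<and>
                    (\<forall>i<length (slots n nu). Is ! i \<in> msub n (slots n nu ! i))}"

definition rnu :: "nat \<Rightarrow> (nat \<Rightarrow> nat) \<Rightarrow> (nat \<Rightarrow> nat set \<Rightarrow> nat set \<Rightarrow> complex)
                    \<Rightarrow> (nat set list \<Rightarrow> complex) \<Rightarrow> (nat set list \<Rightarrow> complex)" where
  "rnu n nu A T = (\<lambda>Js. if Js \<in> tidx n nu then
      (\<Sum>Is\<in>tidx n nu. (\<Prod>i<length (slots n nu). A (slots n nu ! i) (Js ! i) (Is ! i)) * T Is)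
    else 0)"

definition Xi :: "nat \<Rightarrow> (nat \<Rightarrow> nat) \<Rightarrow> nat set list \<Rightarrow> complex" where
  "Xi n nu = (\<lambda>Is. if Is = map (\<lambda>j. {1..j}) (slots n nu) then 1 else 0)"

text \<open>GL_n: g r i is the (r,i) entry, supported on {1..n}^2, with an inverse.\<close>
definition gl :: "nat \<Rightarrow> (nat \<Rightarrow> nat \<Rightarrow> complex) \<Rightarrow> bool" where
  "gl n g \<longleftrightarrow> (\<forall>r i. g r i \<noteq> 0 \<longrightarrow> r \<in> {1..n} \<and> i \<in> {1..n}) \<and>
     (\<exists>h. (\<forall>r i. r \<in> {1..n} \<longrightarrow> i \<in> {1..n} \<longrightarrow> (\<Sum>l=1..n. g r l * h l i) = (if r = i then 1 else 0)) \<and>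
          (\<forall>r i. r \<in> {1..n} \<longrightarrow> i \<in> {1..n} \<longrightarrow> (\<Sum>l=1..n. h r l * g l i) = (if r = i then 1 else 0)))"

definition cha :: "nat \<Rightarrow> (nat \<Rightarrow> nat \<Rightarrow> complex) \<Rightarrow> nat \<Rightarrow> nat set \<Rightarrow> nat set \<Rightarrow> complex" where
  "cha n g m = (\<lambda>J I. if J \<in> msub n m \<and> I \<in> msub n m
       then wedge (map (\<lambda>i. \<lambda>r. g r i) (sorted_list_of_set I)) J else 0)"

definition Hnu :: "nat \<Rightarrow> (nat \<Rightarrow> nat) \<Rightarrow> (nat set list \<Rightarrow> complex) set" where
  "Hnu n nu = cspan {rnu n nu (cha n g) (Xi n nu) | g. gl n g}"

definition rho :: "nat \<Rightarrow> (nat \<Rightarrow> nat) \<Rightarrow> (nat \<Rightarrow> nat set \<Rightarrow> nat set \<Rightarrow> complex)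
                    \<Rightarrow> (nat set list \<Rightarrow> complex) \<Rightarrow> (nat set list \<Rightarrow> complex)" where
  "rho n nu A = (\<lambda>T. if T \<in> Hnu n nu then rnu n nu A T else undefined)"

end

theory Submission
  imports Defs "Jordan_Normal_Form.Determinant" "HOL-Library.Function_Algebras"
begin


abbreviation srt :: "nat set \<Rightarrow> nat list" where "srt J \<equiv> sorted_list_of_set J"

definition wmat :: "(nat \<Rightarrow> complex) list \<Rightarrow> nat set \<Rightarrow> complex mat" where
  "wmat vs J = mat (length vs) (length vs) (\<lambda>(k,l). (vs!k) (srt J ! l))"

lemma W_det:
  assumes "finite J" "card J = length vs"
  shows "wedge vs J = det (wmat vs J)"
proof -
  let ?m = "length vs"
  have "det (wmat vs J) = (\<Sum>p\<in>{p. p permutes {0..<?m}}. of_int (sign p) * (\<Prod>i = 0..<?m. wmat vs J $$ (i, p i)))"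
    by (rule det_def') (simp add: wmat_def)
  also have "\<dots> = (\<Sum>p | p permutes {..<?m}. of_int (sign p) * (\<Prod>k<?m. (vs ! k) (srt J ! p k)))"
  proof (rule sum.cong)
    show "{p. p permutes {0..<?m}} = {p. p permutes {..<?m}}" by (simp add: lessThan_atLeast0)
  next
    fix p assume "p \<in> {p. p permutes {..<?m}}"
    then have p: "p permutes {..<?m}" by simp
    show "of_int (sign p) * (\<Prod>i = 0..<?m. wmat vs J $$ (i, p i)) = of_int (sign p) * (\<Prod>k<?m. (vs ! k) (srt J ! p k))"
      apply (rule arg_cong[where f="\<lambda>x. _ * x"])
      apply (simp add: lessThan_atLeast0[symmetric])
      apply (rule prod.cong, simp)
      using permutes_in_image[OF p] by (simp add: wmat_def)
  qed
  finally show ?thesis using assms by (simp add: wedge_def)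
qed

lemma W_perm:
  assumes p: "p permutes {..<length vs}"
  shows "wedge (map (\<lambda>k. vs ! p k) [0..<length vs]) J = of_int (sign p) * wedge vs J"
proof (cases "finite J \<and> card J = length vs")
  case False
  then show ?thesis unfolding wedge_def by auto
next
  case True
  let ?m = "length vs"
  have p': "p permutes {0..<?m}" using p by (simp add: lessThan_atLeast0)
  have "wedge (map (\<lambda>k. vs ! p k) [0..<length vs]) J = det (wmat (map (\<lambda>k. vs ! p k) [0..<length vs]) J)"
    using True by (intro W_det) auto
  also have "wmat (map (\<lambda>k. vs ! p k) [0..<length vs]) J = mat ?m ?m (\<lambda>(i,j). wmat vs J $$ (p i, j))"
    apply (rule eq_matI)
    using permutes_in_image[OF p] by (auto simp: wmat_def)
  also have "det \<dots> = of_int (sign p) * det (wmat vs J)"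
    by (rule det_permute_rows[OF _ p']) (simp add: wmat_def)
  finally show ?thesis using W_det True by simp
qed

lemma W_rep:
  assumes "k < length vs" "k' < length vs" "k \<noteq> k'" "vs ! k = vs ! k'"
  shows "wedge vs J = 0"
proof (cases "finite J \<and> card J = length vs")
  case False
  then show ?thesis unfolding wedge_def by auto
next
  case True
  have "det (wmat vs J) = 0"
    apply (rule det_identical_rows[of _ "length vs" k k'])
    using assms by (auto simp: wmat_def intro!: eq_vecI)
  then show ?thesis using W_det True by simp
qed

lemma W_zero:
  assumes "k < length vs" "vs ! k = (\<lambda>_. 0)"
  shows "wedge vs J = 0"
  unfolding wedge_def
  using assms by (auto intro!: sum.neutral prod_zero bexI[where x=k])

lemma W_lin:
  assumes k: "k < length vs" and D: "finite D"
  shows "wedge (vs[k := (\<lambda>x. \<Sum>i\<in>D. c i * u i x)]) J = (\<Sum>i\<in>D. c i * wedge (vs[k := u i]) J)"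
proof (cases "finite J \<and> card J = length vs")
  case False
  then show ?thesis unfolding wedge_def by auto
next
  case True
  let ?m = "length vs"
  define R where "R p = (\<Prod>k'\<in>{..<?m}-{k}. (vs ! k') (srt J ! p k'))" for p
  have split: "(\<Prod>k'<?m. (vs[k := w] ! k') (srt J ! p k')) = w (srt J ! p k) * R p" for w p
  proof -
    have "(\<Prod>k'<?m. (vs[k := w] ! k') (srt J ! p k')) =
       (vs[k := w] ! k) (srt J ! p k) * (\<Prod>k'\<in>{..<?m}-{k}. (vs[k := w] ! k') (srt J ! p k'))"
      using k by (subst prod.remove[of _ k]) auto
    also have "(\<Prod>k'\<in>{..<?m}-{k}. (vs[k := w] ! k') (srt J ! p k')) = R p"
      unfolding R_def by (rule prod.cong) auto
    finally show ?thesis using k by simp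
  qed
  have "wedge (vs[k := (\<lambda>x. \<Sum>i\<in>D. c i * u i x)]) J =
     (\<Sum>p | p permutes {..<?m}. of_int (sign p) * ((\<Sum>i\<in>D. c i * u i (srt J ! p k)) * R p))"
    using True by (simp add: wedge_def split)
  also have "\<dots> = (\<Sum>p | p permutes {..<?m}. \<Sum>i\<in>D. c i * (of_int (sign p) * (u i (srt J ! p k) * R p)))"
    by (simp add: sum_distrib_left sum_distrib_right mult_ac)
  also have "\<dots> = (\<Sum>i\<in>D. \<Sum>p | p permutes {..<?m}. c i * (of_int (sign p) * (u i (srt J ! p k) * R p)))"
    by (rule sum.swap)
  also have "\<dots> = (\<Sum>i\<in>D. c i * wedge (vs[k := u i]) J)"
    using True by (simp add: wedge_def split sum_distrib_left)
  finally show ?thesis .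
qed

lemma W_std:
  assumes I: "finite I"
  shows "wedge (map evec (srt I)) J = (if J = I then 1 else 0)"
proof (cases "finite J \<and> card J = card I")
  case False
  then show ?thesis using I by (auto simp: wedge_def)
next
  case True
  let ?s = "srt I" and ?t = "srt J" and ?m = "card I"
  have ls: "length ?s = ?m" using I by simp
  have ds: "distinct ?s" by simp
  have w: "wedge (map evec ?s) J = (\<Sum>p | p permutes {..<?m}. of_int (sign p) * (\<Prod>k<?m. evec (?s ! k) (?t ! p k)))"
    using True ls by (simp add: wedge_def)
  show ?thesis
  proof (cases "J = I")
    case True
    have "(\<Prod>k<?m. evec (?s ! k) (?s ! p k)) = (if p = id then 1 else 0)" if p: "p permutes {..<?m}" for p
    proof (cases "p = id")
      case True then show ?thesis by (simp add: evec_def)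
    next
      case False
      then obtain k where k: "p k \<noteq> k" by (metis eq_id_iff)
      then have "k < ?m" using p by (meson lessThan_iff permutes_not_in)
      moreover have "p k < ?m" using p \<open>k < ?m\<close> by (metis lessThan_iff permutes_in_image)
      ultimately have "evec (?s ! k) (?s ! p k) = 0"
        using k ds ls by (auto simp: evec_def nth_eq_iff_index_eq)
      then show ?thesis using False \<open>k < ?m\<close> by (auto intro!: prod_zero)
    qed
    then have "wedge (map evec ?s) J = (\<Sum>p | p permutes {..<?m}. (if p = id then 1 else 0))"
      using w \<open>J = I\<close> by (auto intro!: sum.cong)
    also have "\<dots> = 1"
    proof -
      have f: "finite {p. p permutes {..<?m}}" by (rule finite_permutations) simp
      have "id \<in> {p. p permutes {..<?m}}" by (simp add: permutes_id)
      then show ?thesis using sum.delta[OF f, of id "\<lambda>_. 1::complex"] by simp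
    qed
    finally show ?thesis using \<open>J = I\<close> by simp
  next
    case False
    have "\<not> I \<subseteq> J"
      using False True I by (metis card_subset_eq)
    then obtain x where x: "x \<in> I" "x \<notin> J" by blast
    then obtain k where k: "k < ?m" "?s ! k = x" using I ls
      by (metis in_set_conv_nth set_sorted_list_of_set)
    have "(\<Prod>k<?m. evec (?s ! k) (?t ! p k)) = 0" if p: "p permutes {..<?m}" for p
    proof -
      have "p k < card I" using p k by (metis lessThan_iff permutes_in_image)
      then have "p k < length ?t" using True by simp
      then have "?t ! p k \<in> J" using True by (metis nth_mem set_sorted_list_of_set)
      then have "evec (?s ! k) (?t ! p k) = 0" using x k by (auto simp: evec_def)
      then show ?thesis using k by (auto intro!: prod_zero)
    qed
    then have "wedge (map evec ?s) J = 0" unfolding w by (intro sum.neutral) auto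
    then show ?thesis using False by simp
  qed
qed


lemma sum_fun_app: "(sum f A) x = (\<Sum>a\<in>A. f a x)"
  by (induction A rule: infinite_finite_induct) auto

interpretation fv: vector_space "\<lambda>(c::complex) (v::'a \<Rightarrow> complex). (\<lambda>x. c * v x)"
  by unfold_locales (auto simp: fun_eq_iff algebra_simps)

definition lc :: "(nat \<Rightarrow> complex) \<Rightarrow> ('a \<Rightarrow> complex) list \<Rightarrow> 'a \<Rightarrow> complex" where
  "lc c vs = (\<lambda>x. \<Sum>i<length vs. c i * (vs ! i) x)"

lemma lspan_lc: "lspan vs = range (\<lambda>c. lc c vs)"
  by (auto simp: lspan_def lc_def)

lemma lc_sum: "lc c vs = (\<Sum>i<length vs. (\<lambda>x. c i * (vs ! i) x))"
  by (simp add: lc_def fun_eq_iff sum_fun_app)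

lemma lspan_sub_span: "lspan vs \<subseteq> fv.span (set vs)"
proof
  fix u assume "u \<in> lspan vs"
  then obtain c where u: "u = lc c vs" by (auto simp: lspan_lc)
  show "u \<in> fv.span (set vs)"
    unfolding u lc_sum
    by (intro fv.span_sum fv.span_scale fv.span_base) auto
qed

lemma span_sub_lspan:
  assumes "distinct vs"
  shows "fv.span (set vs) \<subseteq> lspan vs"
proof
  fix u assume "u \<in> fv.span (set vs)"
  then obtain f where u: "u = (\<Sum>v\<in>set vs. (\<lambda>x. f v * v x))"
    by (auto simp: fv.span_finite)
  have "u = (\<Sum>i<length vs. (\<lambda>x. f (vs ! i) * (vs ! i) x))"
    unfolding u using assms
    by (subst sum.reindex_bij_betw[symmetric, where h="\<lambda>i. vs ! i" and S="{..<length vs}"])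
       (auto simp: bij_betw_def inj_on_def nth_eq_iff_index_eq in_set_conv_nth)
  then have "u = lc (\<lambda>i. f (vs ! i)) vs" by (simp add: lc_sum)
  then show "u \<in> lspan vs" by (auto simp: lspan_lc)
qed

lemma lin_indep_distinct:
  assumes "lin_indep vs"
  shows "distinct vs"
proof (rule ccontr)
  assume "\<not> distinct vs"
  then obtain i j where ij: "i < length vs" "j < length vs" "i \<noteq> j" "vs ! i = vs ! j"
    by (auto simp: distinct_conv_nth)
  define c where "c k = (if k = i then 1 else if k = j then -1 else (0::complex))" for k
  have "(\<Sum>k<length vs. c k * (vs ! k) x) = 0" for x
  proof -
    have "(\<Sum>k<length vs. c k * (vs ! k) x) = (\<Sum>k\<in>{i,j}. c k * (vs ! k) x)"
      by (rule sum.mono_neutral_right) (use ij in \<open>auto simp: c_def\<close>)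
    also have "\<dots> = 0" using ij by (simp add: c_def)
    finally show ?thesis .
  qed
  then have "c i = 0" using assms ij unfolding lin_indep_def by blast
  then show False by (simp add: c_def)
qed

lemma lin_indep_indep:
  assumes "lin_indep vs"
  shows "fv.independent (set vs)"
proof (rule fv.independent_if_scalars_zero)
  show "finite (set vs)" by simp
next
  fix f and y :: "'a \<Rightarrow> complex"
  assume s: "(\<Sum>x\<in>set vs. (\<lambda>z. f x * x z)) = 0" and y: "y \<in> set vs"
  have d: "distinct vs" using assms by (rule lin_indep_distinct)
  have "(\<Sum>x\<in>set vs. (\<lambda>z. f x * x z)) = (\<Sum>i<length vs. (\<lambda>z. f (vs ! i) * (vs ! i) z))"
    using d
    by (subst sum.reindex_bij_betw[symmetric, where h="\<lambda>i. vs ! i" and S="{..<length vs}"])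
       (auto simp: bij_betw_def inj_on_def nth_eq_iff_index_eq in_set_conv_nth)
  then have "\<forall>z. (\<Sum>i<length vs. f (vs ! i) * (vs ! i) z) = 0"
    using s by (simp add: fun_eq_iff sum_fun_app)
  then have "\<forall>i<length vs. f (vs ! i) = 0"
    using assms[unfolded lin_indep_def, rule_format, of "\<lambda>i. f (vs ! i)"] by blast
  then show "f y = 0" using y by (auto simp: in_set_conv_nth)
qed

lemma dim_bound:
  assumes "lin_indep us" "set us \<subseteq> lspan vs"
  shows "length us \<le> length vs"
proof -
  have "set us \<subseteq> fv.span (set vs)" using assms(2) lspan_sub_span by blast
  then have "card (set us) \<le> card (set vs)"
    using fv.independent_span_bound[of "set vs" "set us"] lin_indep_indep[OF assms(1)] by auto
  moreover have "card (set us) = length us" using lin_indep_distinct[OF assms(1)] by (simp add: distinct_card)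
  ultimately show ?thesis using card_length[of vs] by linarith
qed

lemma dim_span:
  assumes "lin_indep us" "set us \<subseteq> lspan vs" "length us = length vs"
  shows "set vs \<subseteq> lspan us"
proof
  fix v assume v: "v \<in> set vs"
  have du: "distinct us" using assms(1) by (rule lin_indep_distinct)
  have iu: "fv.independent (set us)" using assms(1) by (rule lin_indep_indep)
  have sp: "set us \<subseteq> fv.span (set vs)" using assms(2) lspan_sub_span by blast
  show "v \<in> lspan us"
  proof (rule ccontr)
    assume "v \<notin> lspan us"
    then have nv: "v \<notin> fv.span (set us)" using span_sub_lspan[OF du] by blast
    then have "v \<notin> set us" using fv.span_base by blast
    have "fv.independent (insert v (set us))" using fv.independent_insertI[OF nv iu] .
    moreover have "insert v (set us) \<subseteq> fv.span (set vs)" using sp v fv.span_base by blast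
    ultimately have "card (insert v (set us)) \<le> card (set vs)"
      using fv.independent_span_bound[of "set vs"] by auto
    moreover have "card (insert v (set us)) = Suc (length us)"
      using \<open>v \<notin> set us\<close> du by (simp add: distinct_card)
    ultimately show False using card_length[of vs] assms(3) by linarith
  qed
qed

lemma lin_indep_evec:
  assumes "distinct xs"
  shows "lin_indep (map evec xs)"
  unfolding lin_indep_def
proof (intro allI impI)
  fix c i assume h: "\<forall>x. (\<Sum>i<length (map evec xs). c i * (map evec xs ! i) x) = 0" and i: "i < length (map evec xs)"
  have "(\<Sum>k<length xs. c k * evec (xs ! k) (xs ! i)) = c i"
    using i assms by (subst sum.remove[of _ i]) (auto simp: evec_def nth_eq_iff_index_eq intro!: sum.neutral)
  then show "c i = 0" using h[rule_format, of "xs ! i"] by simp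
qed


definition goodP :: "nat \<Rightarrow> nat \<Rightarrow> nat \<Rightarrow> (nat + nat \<Rightarrow> complex) \<Rightarrow> bool" where
  "goodP s0 s1 n u \<longleftrightarrow> (\<forall>x. (x = 0 \<or> n < x \<or> x \<le> s0) \<longrightarrow> u (Inl x) = 0) \<and>
     (\<forall>x. (x = 0 \<or> s1 < x) \<longrightarrow> u (Inr x) = 0) \<and> (\<forall>x. s0 < x \<and> x \<le> s1 \<longrightarrow> u (Inl x) = u (Inr x))"

lemma sum_ev:
  "(\<Sum>i<n. c i * (if P (Suc i) \<and> x = Suc i then 1 else 0)) = (if 0 < x \<and> x \<le> n \<and> P x then c (x - 1) else (0::complex))"
proof (cases "0 < x \<and> x \<le> n \<and> P x")
  case True
  then have "(\<Sum>i<n. c i * (if P (Suc i) \<and> x = Suc i then 1 else 0)) = c (x-1) * 1 + (\<Sum>i\<in>{..<n}-{x-1}. c i * (if P (Suc i) \<and> x = Suc i then 1 else 0))"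
    by (subst sum.remove[of _ "x-1"]) auto
  also have "(\<Sum>i\<in>{..<n}-{x-1}. c i * (if P (Suc i) \<and> x = Suc i then 1 else 0)) = 0"
    by (rule sum.neutral) auto
  finally show ?thesis using True by simp
next
  case False
  then show ?thesis by (auto intro!: sum.neutral)
qed

lemma canonP:
  assumes "s0 \<le> s1" "s1 \<le> n"
  shows "lspan (map (cvec s0 s1) [1..<n+1]) = {u. goodP s0 s1 n u}"
proof -
  have nth: "map (cvec s0 s1) [1..<n+1] ! i = cvec s0 s1 (Suc i)" if "i < n" for i
    using that by (simp add: nth_map_upt del: upt_Suc)
  have L: "(\<Sum>i<n. c i * cvec s0 s1 (Suc i) (Inl x)) = (if 0 < x \<and> x \<le> n \<and> s0 < x then c (x - 1) else 0)" for c x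
  proof -
    have "(\<Sum>i<n. c i * cvec s0 s1 (Suc i) (Inl x)) = (\<Sum>i<n. c i * (if s0 < Suc i \<and> x = Suc i then 1 else 0))"
      by (rule sum.cong) (auto simp: cvec_def dsum_def evec_def)
    then show ?thesis using sum_ev[where n=n and c=c and P="\<lambda>j. s0 < j" and x=x] by simp
  qed
  have R: "(\<Sum>i<n. c i * cvec s0 s1 (Suc i) (Inr x)) = (if 0 < x \<and> x \<le> n \<and> x \<le> s1 then c (x - 1) else 0)" for c x
  proof -
    have "(\<Sum>i<n. c i * cvec s0 s1 (Suc i) (Inr x)) = (\<Sum>i<n. c i * (if Suc i \<le> s1 \<and> x = Suc i then 1 else 0))"
      using assms by (intro sum.cong) (auto simp: cvec_def dsum_def evec_def)
    then show ?thesis using sum_ev[where n=n and c=c and P="\<lambda>j. j \<le> s1" and x=x] by simp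
  qed
  have eqf: "(\<lambda>x. \<Sum>i<length (map (cvec s0 s1) [1..<n+1]). c i * (map (cvec s0 s1) [1..<n+1] ! i) x) = (\<lambda>z. \<Sum>i<n. c i * cvec s0 s1 (Suc i) z)" for c
    by (rule ext, rule sum.cong) (auto simp del: upt_Suc simp: nth)
  have LS: "lspan (map (cvec s0 s1) [1..<n+1]) = {u. \<exists>c. u = (\<lambda>z. \<Sum>i<n. c i * cvec s0 s1 (Suc i) z)}"
    unfolding lspan_def eqf ..
  show ?thesis
    unfolding LS
  proof (intro equalityI subsetI)
    fix u assume "u \<in> {u. \<exists>c. u = (\<lambda>z. \<Sum>i<n. c i * cvec s0 s1 (Suc i) z)}"
    then obtain c where u: "u = (\<lambda>z. \<Sum>i<n. c i * cvec s0 s1 (Suc i) z)"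
      by auto
    show "u \<in> {u. goodP s0 s1 n u}"
      using assms unfolding u goodP_def by (auto simp: L R)
  next
    fix u assume "u \<in> {u. goodP s0 s1 n u}"
    then have g: "goodP s0 s1 n u" by simp
    define c where "c i = (if Suc i \<le> s1 then u (Inr (Suc i)) else u (Inl (Suc i)))" for i
    have "u = (\<lambda>z. \<Sum>i<n. c i * cvec s0 s1 (Suc i) z)"
    proof
      fix z show "u z = (\<Sum>i<n. c i * cvec s0 s1 (Suc i) z)"
      proof (cases z)
        case (Inl x)
        have "(\<Sum>i<n. c i * cvec s0 s1 (Suc i) z) = (if 0 < x \<and> x \<le> n \<and> s0 < x then c (x - 1) else 0)"
          using L Inl by simp
        then show ?thesis using g assms Inl unfolding goodP_def c_def
          by (cases "x = 0"; auto)
      next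
        case (Inr x)
        have "(\<Sum>i<n. c i * cvec s0 s1 (Suc i) z) = (if 0 < x \<and> x \<le> n \<and> x \<le> s1 then c (x - 1) else 0)"
          using R Inr by simp
        then show ?thesis using g assms Inr unfolding goodP_def c_def
          by (cases "x = 0"; auto)
      qed
    qed
    then show "u \<in> {u. \<exists>c. u = (\<lambda>z. \<Sum>i<n. c i * cvec s0 s1 (Suc i) z)}"
      by auto
  qed
qed

lemma lin_indep_sub:
  assumes "lin_indep vs" "\<forall>x. (\<Sum>i\<in>S. c i * (vs ! i) x) = 0" "S \<subseteq> {..<length vs}" "i \<in> S"
  shows "c i = 0"
proof -
  define c' where "c' j = (if j \<in> S then c j else 0)" for j
  have "(\<Sum>j<length vs. c' j * (vs ! j) x) = 0" for x
  proof -
    have "(\<Sum>j<length vs. c' j * (vs ! j) x) = (\<Sum>j\<in>S. c' j * (vs ! j) x)"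
      by (rule sum.mono_neutral_right) (use assms(3) in \<open>auto simp: c'_def\<close>)
    also have "\<dots> = (\<Sum>j\<in>S. c j * (vs ! j) x)" by (simp add: c'_def)
    finally show ?thesis using assms(2) by simp
  qed
  then have "c' i = 0" using assms(1,3,4) unfolding lin_indep_def by blast
  then show ?thesis using assms(4) by (simp add: c'_def)
qed

lemma lin_indep_append:
  assumes "lin_indep (xs @ ys)"
  shows "lin_indep xs" "lin_indep ys"
proof -
  show "lin_indep xs"
    unfolding lin_indep_def
  proof (intro allI impI)
    fix c i assume h: "\<forall>x. (\<Sum>i<length xs. c i * (xs ! i) x) = 0" and i: "i < length xs"
    have "\<forall>x. (\<Sum>j\<in>{..<length xs}. c j * ((xs @ ys) ! j) x) = 0" using h by (simp add: nth_append)
    then show "c i = 0" using lin_indep_sub[OF assms, of c "{..<length xs}" i] i by auto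
  qed
  show "lin_indep ys"
    unfolding lin_indep_def
  proof (intro allI impI)
    fix c i assume h: "\<forall>x. (\<Sum>i<length ys. c i * (ys ! i) x) = 0" and i: "i < length ys"
    let ?d = "\<lambda>j. c (j - length xs)"
    have "(\<Sum>j\<in>{length xs..<length xs + length ys}. ?d j * ((xs @ ys) ! j) x) = (\<Sum>i<length ys. c i * (ys ! i) x)" for x
      by (rule sum.reindex_bij_witness[where i="\<lambda>i. i + length xs" and j="\<lambda>j. j - length xs"])
         (auto simp: nth_append)
    then have "\<forall>x. (\<Sum>j\<in>{length xs..<length xs + length ys}. ?d j * ((xs @ ys) ! j) x) = 0" using h by simp
    then have "?d (i + length xs) = 0"
      using lin_indep_sub[OF assms, of ?d "{length xs..<length xs + length ys}" "i + length xs"] i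
      by (simp add: subset_iff)
    then show "c i = 0" by simp
  qed
qed

lemma supp_lspan:
  assumes "distinct xs" "\<forall>x. v x \<noteq> 0 \<longrightarrow> x \<in> set xs"
  shows "v \<in> lspan (map evec xs)"
proof -
  have "v = (\<lambda>x. \<Sum>i<length xs. v (xs ! i) * evec (xs ! i) x)"
  proof
    fix x
    show "v x = (\<Sum>i<length xs. v (xs ! i) * evec (xs ! i) x)"
    proof (cases "x \<in> set xs")
      case True
      then obtain k where k: "k < length xs" "xs ! k = x" by (auto simp: in_set_conv_nth)
      have "(\<Sum>i<length xs. v (xs ! i) * evec (xs ! i) x) = v (xs ! k) * evec (xs ! k) x"
        using k assms(1) by (subst sum.remove[of _ k]) (auto simp: evec_def nth_eq_iff_index_eq split: if_splits intro!: sum.neutral)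
      then show ?thesis using k by (simp add: evec_def)
    next
      case False
      then have "v x = 0" "\<forall>i<length xs. xs ! i \<noteq> x" using assms(2) nth_mem by blast+
      then show ?thesis by (auto simp: evec_def intro!: sum.neutral)
    qed
  qed
  then show ?thesis by (auto simp: lspan_def)
qed


lemma sum_if_filter:
  "(\<Sum>k<(n::nat). f k * (if P k then g k else 0)) = (\<Sum>k\<in>{k. k < n \<and> P k}. f k * (g k :: complex))"
proof -
  have "(\<Sum>k\<in>{k. k < n \<and> P k}. f k * g k) = (\<Sum>k\<in>{k\<in>{..<n}. P k}. f k * g k)" by (rule sum.cong) auto
  also have "\<dots> = (\<Sum>k<n. if P k then f k * g k else 0)" by (rule sum.inter_filter) simp
  moreover have "(\<lambda>k. f k * (if P k then g k else 0)) = (\<lambda>k. if P k then f k * g k else 0)" by auto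
  ultimately show ?thesis by metis
qed

locale hsetup =
  fixes n s0 s1 m :: nat and L :: "nat set \<Rightarrow> nat set \<Rightarrow> complex"
    and fs gs hs Fs Gs Hs :: "(nat \<Rightarrow> complex) list"
  assumes s01: "s0 \<le> s1" and s1n: "s1 \<le> n"
    and bB: "is_basis n (fs @ gs @ hs)" and bB': "is_basis n (Fs @ Gs @ Hs)"
    and lf: "length fs = length Fs" and lg: "length gs = length Gs" and lh: "length hs = length Hs"
    and Peq: "lspan (map (cvec s0 s1) [1..<n+1]) =
       lspan (map (dsum (\<lambda>_. 0)) Fs @ map2 dsum gs Gs @ map (\<lambda>h. dsum h (\<lambda>_. 0)) hs)"
    and op: "is_op n m L"
    and act: "\<forall>S. S \<subseteq> {..<n} \<and> card S = m \<longrightarrow>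
          mat_apply n m L (wedge (map (\<lambda>i. (fs @ gs @ hs) ! i) (sorted_list_of_set S))) =
            (if {..<length fs} \<subseteq> S \<and> S \<subseteq> {..<length fs + length gs}
             then wedge (map (\<lambda>i. (Fs @ Gs) ! i) (sorted_list_of_set S))
             else (\<lambda>_. 0))"
begin

abbreviation "a \<equiv> length fs"
abbreviation "b \<equiv> length gs"
abbreviation "B \<equiv> fs @ gs @ hs"
abbreviation "B' \<equiv> Fs @ Gs @ Hs"
abbreviation "Gl \<equiv> map (dsum (\<lambda>_. 0)) Fs @ map2 dsum gs Gs @ map (\<lambda>h. dsum h (\<lambda>_. 0)) hs"

lemma lenB: "length B = n" using bB by (simp add: is_basis_def)
lemma lenB': "length B' = n" using bB' by (simp add: is_basis_def)
lemma indB: "lin_indep B" using bB by (simp add: is_basis_def)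
lemma indB': "lin_indep B'" using bB' by (simp add: is_basis_def)
lemma lenGl: "length Gl = n" using lenB lf lg lh by simp

lemma Gnth: "k < n \<Longrightarrow> Gl ! k = dsum (if a \<le> k then B ! k else (\<lambda>_. 0)) (if k < a + b then B' ! k else (\<lambda>_. 0))"
  using lenB lf lg lh by (auto simp: nth_append)

lemma memP: "u \<in> lspan Gl \<longleftrightarrow> goodP s0 s1 n u"
  using Peq canonP[OF s01 s1n] by auto

lemma Pelem:
  assumes "u \<in> lspan Gl"
  shows "\<exists>c. \<forall>x. u (Inl x) = (\<Sum>k<n. c k * (if a \<le> k then (B ! k) x else 0)) \<and>
                 u (Inr x) = (\<Sum>k<n. c k * (if k < a + b then (B' ! k) x else 0))"
proof -
  obtain c where u: "u = (\<lambda>z. \<Sum>i<length Gl. c i * (Gl ! i) z)" using assms by (auto simp: lspan_def)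
  have l: "(Gl ! k) (Inl x) = (if a \<le> k then (B ! k) x else 0)" if "k < n" for k x
    using Gnth[OF that] by (simp add: dsum_def)
  have r: "(Gl ! k) (Inr x) = (if k < a + b then (B' ! k) x else 0)" if "k < n" for k x
    using Gnth[OF that] by (simp add: dsum_def)
  show ?thesis
    apply (rule exI[of _ c])
    unfolding u lenGl
    using l r by (auto intro!: sum.cong)
qed

lemma gen_in: "k < n \<Longrightarrow> Gl ! k \<in> lspan Gl"
proof -
  assume k: "k < n"
  have "(\<Sum>i<length Gl. (if i = k then 1 else 0) * (Gl ! i) z) = (Gl ! k) z" for z
    by (subst sum.remove[of _ k]) (use k lenGl in \<open>auto intro!: sum.neutral\<close>)
  then have "Gl ! k = (\<lambda>z. \<Sum>i<length Gl. (if i = k then 1 else 0) * (Gl ! i) z)"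
    by auto
  then have "\<exists>c. Gl ! k = (\<lambda>z. \<Sum>i<length Gl. c i * (Gl ! i) z)"
    by (intro exI[where x="\<lambda>i. if i = k then 1 else 0"])
  then show ?thesis unfolding lspan_def by simp
qed

lemma gen_good: "k < n \<Longrightarrow> goodP s0 s1 n (dsum (if a \<le> k then B ! k else (\<lambda>_. 0)) (if k < a + b then B' ! k else (\<lambda>_. 0)))"
  using gen_in memP Gnth by metis

lemma F_supp:
  assumes k: "k < a" and nz: "(B' ! k) x \<noteq> 0"
  shows "0 < x \<and> x \<le> s0"
proof -
  have kn: "k < n" using k lenB by simp
  have g: "goodP s0 s1 n (dsum (\<lambda>_. 0) (B' ! k))" using gen_good[OF kn] k by simp
  then have "(x = 0 \<or> s1 < x) \<longrightarrow> (B' ! k) x = 0" "s0 < x \<and> x \<le> s1 \<longrightarrow> 0 = (B' ! k) x"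
    unfolding goodP_def dsum_def by auto
  then show ?thesis using nz by (cases "x = 0"; cases "s1 < x"; cases "s0 < x"; simp)
qed

lemma GH_supp:
  assumes k: "a \<le> k" "k < n" and nz: "(B ! k) x \<noteq> 0"
  shows "s0 < x \<and> x \<le> n"
proof -
  have g: "goodP s0 s1 n (dsum (B ! k) (if k < a + b then B' ! k else (\<lambda>_. 0)))"
    using gen_good[OF k(2)] k by simp
  then have "(x = 0 \<or> n < x \<or> x \<le> s0) \<longrightarrow> (B ! k) x = 0"
    unfolding goodP_def dsum_def by auto
  then show ?thesis using nz by auto
qed

lemma H_supp:
  assumes k: "a + b \<le> k" "k < n" and nz: "(B ! k) x \<noteq> 0"
  shows "s1 < x"
proof -
  have g: "goodP s0 s1 n (dsum (B ! k) (\<lambda>_. 0))"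
    using gen_good[OF k(2)] k by simp
  then have "s0 < x \<and> x \<le> s1 \<longrightarrow> (B ! k) x = 0"
    unfolding goodP_def dsum_def by auto
  moreover have "s0 < x" using GH_supp[of k x] k nz by simp
  ultimately show ?thesis using nz by auto
qed

lemma E_low:
  assumes x: "0 < x" "x \<le> s0"
  shows "evec x \<in> lspan Fs"
proof -
  have "goodP s0 s1 n (dsum (\<lambda>_. 0) (evec x))"
    using x s01 s1n unfolding goodP_def dsum_def evec_def by auto
  then obtain c where c: "\<forall>x'. 0 = (\<Sum>k<n. c k * (if a \<le> k then (B ! k) x' else 0)) \<and>
                 evec x x' = (\<Sum>k<n. c k * (if k < a + b then (B' ! k) x' else 0))"
    using Pelem memP by (fastforce simp: dsum_def)
  have z: "c k = 0" if "a \<le> k" "k < n" for k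
  proof (rule lin_indep_sub[OF indB, of c "{k. k < n \<and> a \<le> k}"])
    show "\<forall>x. (\<Sum>i | i < n \<and> a \<le> i. c i * (B ! i) x) = 0" using c by (simp add: sum_if_filter)
  qed (use that lenB in auto)
  have "evec x x' = (\<Sum>k<a. c k * (Fs ! k) x')" for x'
  proof -
    have "evec x x' = (\<Sum>k<n. c k * (if k < a + b then (B' ! k) x' else 0))" using c by auto
    also have "\<dots> = (\<Sum>k<a. c k * (if k < a + b then (B' ! k) x' else 0))"
      by (rule sum.mono_neutral_right) (use z lenB in auto)
    also have "\<dots> = (\<Sum>k<a. c k * (Fs ! k) x')"
      using lf by (intro sum.cong) (auto simp: nth_append)
    finally show ?thesis .
  qed
  then show ?thesis unfolding lspan_def using lf by auto
qed

lemma E_high: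
  assumes x: "s1 < x" "x \<le> n"
  shows "evec x \<in> lspan hs"
proof -
  have "goodP s0 s1 n (dsum (evec x) (\<lambda>_. 0))"
    using x s01 s1n unfolding goodP_def dsum_def evec_def by auto
  then obtain c where c: "\<forall>x'. evec x x' = (\<Sum>k<n. c k * (if a \<le> k then (B ! k) x' else 0)) \<and>
                 0 = (\<Sum>k<n. c k * (if k < a + b then (B' ! k) x' else 0))"
    using Pelem memP by (fastforce simp: dsum_def)
  have z: "c k = 0" if "k < a + b" for k
  proof (rule lin_indep_sub[OF indB', of c "{k. k < n \<and> k < a + b}"])
    show "\<forall>x. (\<Sum>i | i < n \<and> i < a + b. c i * (B' ! i) x) = 0" using c by (simp add: sum_if_filter)
  qed (use that lenB lenB' lf lg in auto)
  have "evec x x' = (\<Sum>j<length hs. c (j + (a + b)) * (hs ! j) x')" for x'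
  proof -
    have "evec x x' = (\<Sum>k<n. c k * (if a \<le> k then (B ! k) x' else 0))" using c by auto
    also have "\<dots> = (\<Sum>k\<in>{a+b..<n}. c k * (if a \<le> k then (B ! k) x' else 0))"
      by (rule sum.mono_neutral_right) (use z in auto)
    also have "\<dots> = (\<Sum>j<length hs. c (j + (a + b)) * (hs ! j) x')"
      by (rule sum.reindex_bij_witness[where i="\<lambda>j. j + (a + b)" and j="\<lambda>k. k - (a + b)"])
         (use lenB in \<open>auto simp: nth_append\<close>)
    finally show ?thesis .
  qed
  then have "\<exists>c'. evec x = (\<lambda>x'. \<Sum>j<length hs. c' j * (hs ! j) x')"
    by (intro exI[where x="\<lambda>j. c (j + (a + b))"]) auto
  then show ?thesis unfolding lspan_def by simp
qed

lemma E_mid: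
  assumes x: "s0 < x" "x \<le> s1"
  shows "\<exists>c. \<forall>x'. evec x x' = (\<Sum>k<n. c k * (if a \<le> k then (B ! k) x' else 0)) \<and>
                 evec x x' = (\<Sum>k<n. c k * (if k < a + b then (B' ! k) x' else 0))"
proof -
  have "goodP s0 s1 n (dsum (evec x) (evec x))"
    using x s01 s1n unfolding goodP_def dsum_def evec_def by auto
  then show ?thesis using Pelem memP by (fastforce simp: dsum_def)
qed

lemma a_eq: "a = s0"
proof -
  have iF: "lin_indep Fs" using lin_indep_append(1)[OF indB'] .
  have "set Fs \<subseteq> lspan (map evec [1..<s0+1])"
  proof
    fix v assume "v \<in> set Fs"
    then obtain k where k: "k < a" "v = Fs ! k" using lf by (auto simp: in_set_conv_nth)
    have "v x \<noteq> 0 \<Longrightarrow> x \<in> set [1..<s0+1]" for x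
      using F_supp[of k x] k lf by (auto simp: nth_append)
    then show "v \<in> lspan (map evec [1..<s0+1])" by (intro supp_lspan) auto
  qed
  note sub1 = this
  have 1: "a \<le> s0" using dim_bound[OF iF sub1] lf by (simp del: upt_Suc)
  have sub2: "set (map evec [1..<s0+1]) \<subseteq> lspan Fs" using E_low by auto
  have "s0 \<le> length Fs" using dim_bound[OF lin_indep_evec sub2] by (simp del: upt_Suc)
  then show ?thesis using 1 lf by simp
qed

lemma ab_eq: "a + b = s1"
proof -
  have iH: "lin_indep hs" using lin_indep_append(2)[of "fs @ gs" hs] indB by simp
  have "set hs \<subseteq> lspan (map evec [s1+1..<n+1])"
  proof
    fix v assume "v \<in> set hs"
    then obtain j where j: "j < length hs" "v = hs ! j" by (auto simp: in_set_conv_nth)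
    have "v x \<noteq> 0 \<Longrightarrow> x \<in> set [s1+1..<n+1]" for x
      using H_supp[of "j + (a + b)" x] GH_supp[of "j + (a+b)" x] j lenB by (auto simp: nth_append)
    then show "v \<in> lspan (map evec [s1+1..<n+1])" by (intro supp_lspan) auto
  qed
  note sub1 = this
  have 1: "length hs \<le> n - s1" using dim_bound[OF iH sub1] by (simp del: upt_Suc)
  have sub2: "set (map evec [s1+1..<n+1]) \<subseteq> lspan hs" using E_high by auto
  have "n - s1 \<le> length hs" using dim_bound[OF lin_indep_evec sub2] by (simp del: upt_Suc)
  then show ?thesis using 1 lenB s1n by simp
qed

lemma spanB:
  assumes "0 < x" "x \<le> n"
  shows "\<exists>c. evec x = (\<lambda>x'. \<Sum>k<n. c k * (B ! k) x')"
proof -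
  have "set B \<subseteq> lspan (map evec [1..<n+1])"
  proof
    fix v assume v: "v \<in> set B"
    then have "v \<in> Vn n" using bB by (auto simp: is_basis_def)
    then show "v \<in> lspan (map evec [1..<n+1])" by (intro supp_lspan) (auto simp: Vn_def)
  qed
  note sub1 = this
  have "set (map evec [1..<n+1]) \<subseteq> lspan B" using dim_span[OF indB sub1] lenB by (simp del: upt_Suc)
  moreover have "evec x \<in> set (map evec [1..<n+1])" using assms by (simp del: upt_Suc)
  ultimately have "evec x \<in> lspan B" by blast
  then show ?thesis using lenB by (auto simp: lspan_def)
qed

end


abbreviation dl :: "nat \<Rightarrow> nat \<Rightarrow> complex" where "dl j \<equiv> (\<lambda>i. if i = j then 1 else 0)"

lemma multilin_vanish:
  fixes Th :: "(nat \<Rightarrow> nat \<Rightarrow> complex) \<Rightarrow> complex" and D :: "nat \<Rightarrow> nat set" and m :: nat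
  assumes fin: "\<And>k. k < m \<Longrightarrow> finite (D k)"
    and lin: "\<And>C k r. k < m \<Longrightarrow> Th (C(k := (\<lambda>i. \<Sum>j\<in>D k. r j * dl j i))) = (\<Sum>j\<in>D k. r j * Th (C(k := dl j)))"
    and base: "\<And>C. (\<forall>k<m. \<exists>j\<in>D k. C k = dl j) \<Longrightarrow> Th C = 0"
    and supp: "\<forall>k<m. \<forall>i. i \<notin> D k \<longrightarrow> C k i = 0"
  shows "Th C = 0"
proof -
  have "\<forall>C. (\<forall>k<m. \<forall>i. i \<notin> D k \<longrightarrow> C k i = 0) \<and> (\<forall>k. j \<le> k \<and> k < m \<longrightarrow> (\<exists>i\<in>D k. C k = dl i)) \<longrightarrow> Th C = 0"
    if "j \<le> m" for j
    using that
  proof (induction j)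
    case 0
    then show ?case using base by auto
  next
    case (Suc j)
    show ?case
    proof (intro allI impI)
      fix C assume h: "(\<forall>k<m. \<forall>i. i \<notin> D k \<longrightarrow> C k i = 0) \<and> (\<forall>k. Suc j \<le> k \<and> k < m \<longrightarrow> (\<exists>i\<in>D k. C k = dl i))"
      have jm: "j < m" using Suc by simp
      have row: "C j = (\<lambda>i. \<Sum>l\<in>D j. C j l * dl l i)"
      proof
        fix i
        show "C j i = (\<Sum>l\<in>D j. C j l * dl l i)"
        proof (cases "i \<in> D j")
          case True
          then show ?thesis using fin[OF jm] by (simp add: if_distrib cong: if_cong)
        next
          case False
          then show ?thesis using h jm by (auto intro!: sum.neutral)
        qed
      qed
      have "C = C(j := (\<lambda>i. \<Sum>l\<in>D j. C j l * dl l i))" using row by (metis fun_upd_triv)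
      then have "Th C = (\<Sum>l\<in>D j. C j l * Th (C(j := dl l)))" using lin[OF jm] by metis
      also have "\<dots> = 0"
      proof (rule sum.neutral, rule ballI)
        fix l assume l: "l \<in> D j"
        have s1: "\<forall>k<m. \<forall>i. i \<notin> D k \<longrightarrow> (C(j := dl l)) k i = 0"
          using h l by auto
        have s2: "\<forall>k. j \<le> k \<and> k < m \<longrightarrow> (\<exists>i\<in>D k. (C(j := dl l)) k = dl i)"
        proof (intro allI impI)
          fix k assume k: "j \<le> k \<and> k < m"
          show "\<exists>i\<in>D k. (C(j := dl l)) k = dl i"
          proof (cases "k = j")
            case True then show ?thesis using l by auto
          next
            case False then show ?thesis using h k by auto
          qed
        qed
        have "Th (C(j := dl l)) = 0"
          using Suc.IH Suc.prems s1 s2 by simp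
        then show "C j l * Th (C(j := dl l)) = 0" by simp
      qed
      finally show "Th C = 0" .
    qed
  qed
  from this[of m] show ?thesis using supp by (metis le_refl not_less)
qed

lemma mat_apply_lin:
  "finite D \<Longrightarrow> mat_apply n m L (\<lambda>J. \<Sum>i\<in>D. c i * w i J) J' = (\<Sum>i\<in>D. c i * mat_apply n m L (w i) J')"
  unfolding mat_apply_def
  by (simp add: sum_distrib_left mult_ac) (rule sum.swap)

lemma mat_apply_scale:
  "mat_apply n m L (\<lambda>J. c * w J) J' = c * mat_apply n m L w J'"
  unfolding mat_apply_def by (simp add: sum_distrib_left mult_ac)

lemma mat_apply_zero:
  "mat_apply n m L (\<lambda>J. 0) J' = 0"
  unfolding mat_apply_def by simp

lemma perm_sort:
  assumes inj: "inj_on i {..<m}"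
  shows "\<exists>p. p permutes {..<m} \<and> (\<forall>k<m. i k = srt (i ` {..<m}) ! p k)"
proof -
  let ?S = "i ` {..<m}"
  let ?s = "srt ?S"
  have cS: "card ?S = m" using inj by (simp add: card_image)
  have ls: "length ?s = m" using cS by simp
  have b1: "bij_betw (\<lambda>j. ?s ! j) {..<m} ?S"
    using bij_betw_nth[of ?s "{..<m}" ?S] ls by simp
  have b2: "bij_betw i {..<m} ?S" using inj by (simp add: bij_betw_def)
  define q where "q = inv_into {..<m} (\<lambda>j. ?s ! j)"
  have bq: "bij_betw q ?S {..<m}" unfolding q_def by (rule bij_betw_inv_into[OF b1])
  have bqi: "bij_betw (q \<circ> i) {..<m} {..<m}" by (rule bij_betw_trans[OF b2 bq])
  define p where "p k = (if k < m then q (i k) else k)" for k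
  have "bij_betw p {..<m} {..<m}"
    using bqi by (rule bij_betw_cong[THEN iffD1, rotated]) (auto simp: p_def)
  then have pp: "p permutes {..<m}" by (rule bij_imp_permutes) (auto simp: p_def)
  have "i k = ?s ! p k" if k: "k < m" for k
  proof -
    have "i k \<in> ?S" using k by simp
    then have "?s ! (q (i k)) = i k"
      unfolding q_def using b1 by (simp add: bij_betw_def f_inv_into_f)
    then show ?thesis using k by (simp add: p_def)
  qed
  then show ?thesis using pp by blast
qed

lemma wedge_perm_sorted:
  assumes inj: "inj_on i {..<m}"
  shows "\<exists>p. p permutes {..<m} \<and>
    (\<forall>f J. wedge (map (\<lambda>k. f (i k)) [0..<m]) J = of_int (sign p) * wedge (map f (srt (i ` {..<m}))) J)"
proof -
  obtain p where p: "p permutes {..<m}" "\<forall>k<m. i k = srt (i ` {..<m}) ! p k"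
    using perm_sort[OF inj] by blast
  have ls: "length (srt (i ` {..<m})) = m" using inj by (simp add: card_image)
  have "wedge (map (\<lambda>k. f (i k)) [0..<m]) J = of_int (sign p) * wedge (map f (srt (i ` {..<m}))) J" for f J
  proof -
    let ?vs = "map f (srt (i ` {..<m}))"
    have e: "?vs ! p k = f (i k)" if k: "k < m" for k
    proof -
      have pk: "p k < m" using p(1) k by (metis lessThan_iff permutes_in_image)
      then have "?vs ! p k = f (srt (i ` {..<m}) ! p k)" using ls by simp
      also have "srt (i ` {..<m}) ! p k = i k" using p(2) k by metis
      finally show ?thesis .
    qed
    have eqm: "map (\<lambda>k. f (i k)) [0..<m] = map (\<lambda>k. ?vs ! p k) [0..<length ?vs]"
      using ls by (intro map_cong) (simp_all add: e)
    have pl: "p permutes {..<length ?vs}" using p(1) ls by simp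
    have "wedge (map (\<lambda>k. ?vs ! p k) [0..<length ?vs]) J = of_int (sign p) * wedge ?vs J"
      by (rule W_perm[OF pl])
    then show ?thesis unfolding eqm .
  qed
  then show ?thesis using p by blast
qed


lemma block_wedge:
  assumes am: "a \<le> m" and len: "length vs = m"
    and lo: "\<And>k x. k < a \<Longrightarrow> (vs ! k) x \<noteq> 0 \<Longrightarrow> 0 < x \<and> x \<le> a"
    and hi: "\<And>k x. a \<le> k \<Longrightarrow> k < m \<Longrightarrow> x \<noteq> Suc k \<Longrightarrow> (vs ! k) x \<noteq> 0 \<Longrightarrow> 0 < x \<and> x \<le> a"
    and hi1: "\<And>k. a \<le> k \<Longrightarrow> k < m \<Longrightarrow> (vs ! k) (Suc k) = 1"
  shows "wedge vs J = (if J = {1..m} then (\<Sum>p | p permutes {..<a}. of_int (sign p) * (\<Prod>k<a. (vs ! k) (Suc (p k)))) else 0)"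
proof (cases "J = {1..m}")
  case False
  show ?thesis
  proof (cases "finite J \<and> card J = m")
    case False
    then show ?thesis using len \<open>J \<noteq> {1..m}\<close> unfolding wedge_def by auto
  next
    case True
    have "\<not> J \<subseteq> {1..m}"
      using True \<open>J \<noteq> {1..m}\<close> by (metis card_atLeastAtMost card_subset_eq diff_Suc_1 finite_atLeastAtMost)
    then obtain j where j: "j \<in> J" "j \<notin> {1..m}" by blast
    have vz: "(vs ! k) j = 0" if "k < m" for k
    proof (rule ccontr)
      assume nz: "(vs ! k) j \<noteq> 0"
      show False
      proof (cases "k < a")
        case True then show False using lo[OF True nz] j am by auto
      next
        case False
        have "j \<noteq> Suc k" using j that by auto
        then show False using hi[of k j] False that nz j am by auto
      qed
    qed
    let ?t = "srt J"
    obtain l where l: "l < length ?t" "?t ! l = j" using j True by (metis in_set_conv_nth set_sorted_list_of_set)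
    have lm: "l < m" using l True by simp
    have "(\<Prod>k<m. (vs ! k) (?t ! p k)) = 0" if p: "p permutes {..<m}" for p
    proof -
      have k: "Hilbert_Choice.inv p l < m" using p lm by (metis lessThan_iff permutes_in_image permutes_inv)
      have "p (Hilbert_Choice.inv p l) = l" using p by (simp add: permutes_inverses(1))
      then have "(vs ! Hilbert_Choice.inv p l) (?t ! p (Hilbert_Choice.inv p l)) = 0" using vz[OF k] l by simp
      then show ?thesis using k by (auto intro!: prod_zero)
    qed
    then have "wedge vs J = 0" using True len unfolding wedge_def by (auto intro!: sum.neutral)
    then show ?thesis using False by simp
  qed
next
  case True
  have t: "srt J ! l = Suc l" if "l < m" for l
  proof -
    have "srt J = [1..<Suc m]" using True by (simp add: atLeastLessThanSuc_atLeastAtMost[symmetric] del: upt_Suc)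
    then show ?thesis using that by (simp del: upt_Suc)
  qed
  have w: "wedge vs J = (\<Sum>p | p permutes {..<m}. of_int (sign p) * (\<Prod>k<m. (vs ! k) (Suc (p k))))"
  proof -
    have "wedge vs J = (\<Sum>p | p permutes {..<m}. of_int (sign p) * (\<Prod>k<m. (vs ! k) (srt J ! p k)))"
      using True len by (simp add: wedge_def)
    also have "\<dots> = (\<Sum>p | p permutes {..<m}. of_int (sign p) * (\<Prod>k<m. (vs ! k) (Suc (p k))))"
    proof (rule sum.cong[OF refl])
      fix p assume "p \<in> {p. p permutes {..<m}}"
      then have p: "p permutes {..<m}" by simp
      show "of_int (sign p) * (\<Prod>k<m. (vs ! k) (srt J ! p k)) = of_int (sign p) * (\<Prod>k<m. (vs ! k) (Suc (p k)))"
      proof (intro arg_cong[where f="\<lambda>x. _ * x"] prod.cong refl)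
        fix k assume "k \<in> {..<m}"
        then have "p k < m" using p by (metis lessThan_iff permutes_in_image)
        then show "(vs ! k) (srt J ! p k) = (vs ! k) (Suc (p k))" using t by simp
      qed
    qed
    finally show ?thesis .
  qed
  have zero: "(\<Prod>k<m. (vs ! k) (Suc (p k))) = 0" if p: "p permutes {..<m}" and np: "\<not> p permutes {..<a}" for p
  proof (rule ccontr)
    assume nz: "(\<Prod>k<m. (vs ! k) (Suc (p k))) \<noteq> 0"
    then have f: "(vs ! k) (Suc (p k)) \<noteq> 0" if "k < m" for k using that by auto
    have pa: "p k < a" if "k < a" for k
      using lo[OF that f] that am by auto
    have img: "p ` {..<a} = {..<a}"
    proof (rule card_subset_eq)
      show "p ` {..<a} \<subseteq> {..<a}" using pa by auto
      have "inj_on p {..<a}" using p by (meson permutes_inj inj_on_subset subset_UNIV)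
      then show "card (p ` {..<a}) = card {..<a}" by (simp add: card_image)
    qed simp
    have fx: "p k = k" if "a \<le> k" "k < m" for k
    proof (rule ccontr)
      assume ne: "p k \<noteq> k"
      have "p k \<notin> {..<a}"
      proof
        assume "p k \<in> {..<a}"
        then obtain k' where "k' < a" "p k' = p k" using img by (metis imageE lessThan_iff)
        then have "k' = k" using p by (metis permutes_inj injD)
        then show False using \<open>k' < a\<close> that by simp
      qed
      then have "Suc (p k) \<noteq> Suc k" "\<not> (0 < Suc (p k) \<and> Suc (p k) \<le> a)" using ne by auto
      then show False using hi[OF that] f[OF that(2)] by blast
    qed
    have "p permutes {..<a}"
      unfolding permutes_def
    proof (intro conjI allI impI)
      fix x assume "x \<notin> {..<a}"
      then show "p x = x" using fx p by (cases "x < m") (auto simp: permutes_not_in)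
    next
      fix y show "\<exists>!x. p x = y" using p by (simp add: permutes_def)
    qed
    then show False using np by simp
  qed
  have "(\<Sum>p | p permutes {..<m}. of_int (sign p) * (\<Prod>k<m. (vs ! k) (Suc (p k)))) =
        (\<Sum>p | p permutes {..<a}. of_int (sign p) * (\<Prod>k<m. (vs ! k) (Suc (p k))))"
  proof (rule sum.mono_neutral_right)
    show "finite {p. p permutes {..<m}}" by (rule finite_permutations) simp
    show "{p. p permutes {..<a}} \<subseteq> {p. p permutes {..<m}}"
      using am by (auto intro: permutes_subset)
    show "\<forall>p\<in>{p. p permutes {..<m}} - {p. p permutes {..<a}}. of_int (sign p) * (\<Prod>k<m. (vs ! k) (Suc (p k))) = 0"
      using zero by auto
  qed
  also have "\<dots> = (\<Sum>p | p permutes {..<a}. of_int (sign p) * (\<Prod>k<a. (vs ! k) (Suc (p k))))"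
  proof (rule sum.cong[OF refl])
    fix p assume "p \<in> {p. p permutes {..<a}}"
    then have p: "p permutes {..<a}" by simp
    have "(\<Prod>k<m. (vs ! k) (Suc (p k))) = (\<Prod>k<a. (vs ! k) (Suc (p k))) * (\<Prod>k\<in>{a..<m}. (vs ! k) (Suc (p k)))"
      using am by (metis prod.atLeastLessThan_concat lessThan_atLeast0 zero_le)
    also have "(\<Prod>k\<in>{a..<m}. (vs ! k) (Suc (p k))) = 1"
      using p hi1 by (auto intro!: prod.neutral simp: permutes_not_in)
    finally show "of_int (sign p) * (\<Prod>k<m. (vs ! k) (Suc (p k))) = of_int (sign p) * (\<Prod>k<a. (vs ! k) (Suc (p k)))"
      by simp
  qed
  finally show ?thesis using w True by simp
qed

lemma det_nonzero:
  fixes u :: "nat \<Rightarrow> nat \<Rightarrow> complex"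
  assumes supp: "\<And>k x. k < a \<Longrightarrow> u k x \<noteq> 0 \<Longrightarrow> 0 < x \<and> x \<le> a"
    and indep: "\<And>lam. (\<forall>x. (\<Sum>k<a. lam k * u k x) = 0) \<Longrightarrow> \<forall>k<a. lam k = 0"
  shows "(\<Sum>p | p permutes {..<a}. of_int (sign p) * (\<Prod>k<a. u k (Suc (p k)))) \<noteq> 0"
proof
  assume z: "(\<Sum>p | p permutes {..<a}. of_int (sign p) * (\<Prod>k<a. u k (Suc (p k)))) = 0"
  define A where "A = mat a a (\<lambda>(k,l). u k (Suc l))"
  have Ac: "A \<in> carrier_mat a a" by (simp add: A_def)
  have "det A = (\<Sum>p\<in>{p. p permutes {0..<a}}. of_int (sign p) * (\<Prod>i = 0..<a. A $$ (i, p i)))"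
    by (rule det_def'[OF Ac])
  also have "\<dots> = (\<Sum>p | p permutes {..<a}. of_int (sign p) * (\<Prod>k<a. u k (Suc (p k))))"
  proof (rule sum.cong)
    show "{p. p permutes {0..<a}} = {p. p permutes {..<a}}" by (simp add: lessThan_atLeast0)
  next
    fix p assume "p \<in> {p. p permutes {..<a}}"
    then have p: "p permutes {..<a}" by simp
    show "of_int (sign p) * (\<Prod>i = 0..<a. A $$ (i, p i)) = of_int (sign p) * (\<Prod>k<a. u k (Suc (p k)))"
      apply (rule arg_cong[where f="\<lambda>x. _ * x"])
      apply (simp add: lessThan_atLeast0[symmetric])
      apply (rule prod.cong, simp)
      using permutes_in_image[OF p] by (simp add: A_def)
  qed
  finally have "det (transpose_mat A) = 0" using z det_transpose[OF Ac] by simp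
  then obtain v where v: "v \<in> carrier_vec a" "v \<noteq> 0\<^sub>v a" "transpose_mat A *\<^sub>v v = 0\<^sub>v a"
    using det_0_iff_vec_prod_zero[of "transpose_mat A" a] Ac by auto
  have comp: "(\<Sum>k<a. v $ k * u k (Suc l)) = 0" if l: "l < a" for l
  proof -
    have "(transpose_mat A *\<^sub>v v) $ l = 0" using v(3) l by simp
    moreover have "(transpose_mat A *\<^sub>v v) $ l = (\<Sum>k<a. v $ k * u k (Suc l))"
      using l v(1) by (auto simp: A_def scalar_prod_def lessThan_atLeast0 mult.commute intro!: sum.cong)
    ultimately show ?thesis by simp
  qed
  have "\<forall>x. (\<Sum>k<a. v $ k * u k x) = 0"
  proof
    fix x
    show "(\<Sum>k<a. v $ k * u k x) = 0"
    proof (cases "0 < x \<and> x \<le> a")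
      case True
      then have "x - 1 < a" "Suc (x - 1) = x" by auto
      then show ?thesis using comp[of "x - 1"] by simp
    next
      case False
      then have "\<forall>k<a. u k x = 0" using supp by blast
      then show ?thesis by (auto intro!: sum.neutral)
    qed
  qed
  then have "\<forall>k<a. v $ k = 0" using indep by blast
  then have "v = 0\<^sub>v a" using v(1) by (auto intro!: eq_vecI)
  then show False using v(2) by simp
qed


lemma wedge_row_lin:
  assumes k: "k < length vs" and D: "finite D" and I: "finite I"
  shows "wedge (vs[k := (\<lambda>x. \<Sum>i\<in>I. (\<Sum>j\<in>D. r j * dl j i) * w i x)]) J =
         (\<Sum>j\<in>D. r j * wedge (vs[k := (\<lambda>x. \<Sum>i\<in>I. dl j i * w i x)]) J)"
proof -
  have "(\<lambda>x. \<Sum>i\<in>I. (\<Sum>j\<in>D. r j * dl j i) * w i x) = (\<lambda>x. \<Sum>j\<in>D. r j * (\<Sum>i\<in>I. dl j i * w i x))"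
    by (rule ext) (simp add: sum_distrib_left sum_distrib_right mult_ac sum.swap[of _ I D])
  then show ?thesis using W_lin[OF k D, of r "\<lambda>j x. \<Sum>i\<in>I. dl j i * w i x" J] by simp
qed

lemma fin_msub: "finite (msub n m)"
  by (rule finite_subset[of _ "Pow {1..n}"]) (auto simp: msub_def)

context hsetup
begin

definition vecsB :: "(nat \<Rightarrow> nat \<Rightarrow> complex) \<Rightarrow> (nat \<Rightarrow> complex) list" where
  "vecsB C = map (\<lambda>k. \<lambda>x. \<Sum>i<n. C k i * (B ! i) x) [0..<m]"

definition bnd :: "nat \<Rightarrow> nat" where "bnd k = (if k < a then a else a + b)"

definition vecsT :: "(nat \<Rightarrow> nat \<Rightarrow> complex) \<Rightarrow> (nat \<Rightarrow> complex) list" where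
  "vecsT C = map (\<lambda>k. \<lambda>x. \<Sum>i<bnd k. C k i * (B' ! i) x) [0..<m]"

lemma len_vecsB[simp]: "length (vecsB C) = m" by (simp add: vecsB_def)
lemma len_vecsT[simp]: "length (vecsT C) = m" by (simp add: vecsT_def)

lemma vecsB_upd: "k < m \<Longrightarrow> vecsB (C(k := r)) = (vecsB C)[k := (\<lambda>x. \<Sum>i<n. r i * (B ! i) x)]"
  by (rule nth_equalityI) (auto simp: vecsB_def nth_list_update)

lemma vecsT_upd: "k < m \<Longrightarrow> vecsT (C(k := r)) = (vecsT C)[k := (\<lambda>x. \<Sum>i<bnd k. r i * (B' ! i) x)]"
  by (rule nth_equalityI) (auto simp: vecsT_def nth_list_update)

lemma vecsB_lin:
  assumes k: "k < m" and D: "finite D"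
  shows "wedge (vecsB (C(k := (\<lambda>i. \<Sum>j\<in>D. r j * dl j i)))) J = (\<Sum>j\<in>D. r j * wedge (vecsB (C(k := dl j))) J)"
  using wedge_row_lin[of k "vecsB C" D "{..<n}" r "\<lambda>i. B ! i" J] k D
  by (simp add: vecsB_upd)

lemma vecsT_lin:
  assumes k: "k < m" and D: "finite D"
  shows "wedge (vecsT (C(k := (\<lambda>i. \<Sum>j\<in>D. r j * dl j i)))) J = (\<Sum>j\<in>D. r j * wedge (vecsT (C(k := dl j))) J)"
  using wedge_row_lin[of k "vecsT C" D "{..<bnd k}" r "\<lambda>i. B' ! i" J] k D
  by (simp add: vecsT_upd)

lemma Th1_lin:
  assumes k: "k < m" and D: "finite D"
  shows "mat_apply n m L (wedge (vecsB (C(k := (\<lambda>i. \<Sum>j\<in>D. r j * dl j i))))) J =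
    (\<Sum>j\<in>D. r j * mat_apply n m L (wedge (vecsB (C(k := dl j)))) J)"
proof -
  have "wedge (vecsB (C(k := (\<lambda>i. \<Sum>j\<in>D. r j * dl j i)))) = (\<lambda>J. \<Sum>j\<in>D. r j * wedge (vecsB (C(k := dl j))) J)"
    using vecsB_lin[OF k D] by (rule ext)
  then show ?thesis using mat_apply_lin[OF D] by simp
qed

lemma vecsB_dl:
  assumes "\<forall>k<m. C k = dl (ii k) \<and> ii k < n"
  shows "vecsB C = map (\<lambda>k. B ! ii k) [0..<m]"
proof (rule nth_equalityI)
  fix k assume "k < length (vecsB C)"
  then have k: "k < m" by simp
  have jn: "ii k < n" using assms k by simp
  have "(\<Sum>i<n. dl (ii k) i * (B ! i) x) = (B ! ii k) x" for x
    by (subst sum.remove[of _ "ii k"]) (use jn in \<open>auto intro!: sum.neutral\<close>)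
  then have "(\<lambda>x. \<Sum>i<n. dl (ii k) i * (B ! i) x) = B ! ii k" by auto
  then show "vecsB C ! k = map (\<lambda>k. B ! ii k) [0..<m] ! k" using assms k by (simp add: vecsB_def)
qed simp

lemma Th1_noninj:
  fixes C :: "nat \<Rightarrow> nat \<Rightarrow> complex"
  assumes ii: "\<forall>k<m. C k = dl (ii k) \<and> ii k < n" and ni: "\<not> inj_on ii {..<m}"
  shows "mat_apply n m L (wedge (vecsB C)) J = 0"
proof -
  obtain k k' where kk: "k < m" "k' < m" "k \<noteq> k'" "ii k = ii k'"
    using ni unfolding inj_on_def by auto
  have "wedge (vecsB C) = (\<lambda>_. 0)"
    by (rule ext, rule W_rep[of k _ k']) (use kk vecsB_dl[OF ii] in auto)
  then show ?thesis using mat_apply_zero by simp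
qed

lemma L_zero_out:
  assumes out: "\<not> (a \<le> m \<and> m \<le> a + b)"
  shows "L = (\<lambda>_ _. 0)"
proof (intro ext)
  fix J I
  show "L J I = 0"
  proof (cases "J \<in> msub n m \<and> I \<in> msub n m")
    case False
    then show ?thesis using op unfolding is_op_def by blast
  next
    case True
    then have I: "I \<subseteq> {1..n}" "card I = m" "finite I" by (auto simp: msub_def finite_subset)
    let ?s = "srt I"
    have ls: "length ?s = m" using I by simp
    have sk: "0 < ?s ! k \<and> ?s ! k \<le> n" if "k < m" for k
    proof -
      have "?s ! k \<in> I" using that ls I by (metis nth_mem set_sorted_list_of_set)
      then show ?thesis using I by auto
    qed
    define C0 where "C0 k i = (if i < n then (SOME c. evec (?s ! k) = (\<lambda>x'. \<Sum>i<n. c i * (B ! i) x')) i else 0)" for k i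
    have vC0: "vecsB C0 = map evec ?s"
    proof (rule nth_equalityI)
      fix k assume "k < length (vecsB C0)"
      then have k: "k < m" by simp
      have ex: "\<exists>c. evec (?s ! k) = (\<lambda>x'. \<Sum>i<n. c i * (B ! i) x')" using spanB sk[OF k] by blast
      have "(\<lambda>x. \<Sum>i<n. C0 k i * (B ! i) x) = evec (?s ! k)"
        using someI_ex[OF ex] by (simp add: C0_def)
      then show "vecsB C0 ! k = map evec ?s ! k" using k ls by (simp add: vecsB_def)
    qed (use I in simp)
    have "L J I = mat_apply n m L (\<lambda>I'. if I' = I then 1 else 0) J"
      unfolding mat_apply_def using True fin_msub by (simp add: if_distrib sum.delta cong: if_cong)
    also have "(\<lambda>I'. if I' = I then 1 else (0::complex)) = wedge (vecsB C0)"
      unfolding vC0 using W_std[OF I(3)] by auto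
    finally have LJI: "L J I = mat_apply n m L (wedge (vecsB C0)) J" .
    have "mat_apply n m L (wedge (vecsB C0)) J = 0"
    proof (rule multilin_vanish[where D="\<lambda>_. {..<n}" and m=m and Th="\<lambda>C. mat_apply n m L (wedge (vecsB C)) J"])
      show "\<And>C k r. k < m \<Longrightarrow> mat_apply n m L (wedge (vecsB (C(k := \<lambda>i. \<Sum>j<n. r j * dl j i)))) J =
            (\<Sum>j<n. r j * mat_apply n m L (wedge (vecsB (C(k := dl j)))) J)"
        using Th1_lin by simp
      show "\<forall>k<m. \<forall>i. i \<notin> {..<n} \<longrightarrow> C0 k i = 0" by (simp add: C0_def)
    next
      fix C :: "nat \<Rightarrow> nat \<Rightarrow> complex"
      assume "\<forall>k<m. \<exists>j\<in>{..<n}. C k = dl j"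
      then obtain ii where ii: "\<forall>k<m. C k = dl (ii k) \<and> ii k < n" by (metis lessThan_iff)
      show "mat_apply n m L (wedge (vecsB C)) J = 0"
      proof (cases "inj_on ii {..<m}")
        case False
        then show ?thesis using Th1_noninj[OF ii] by simp
      next
        case inj: True
        let ?S = "ii ` {..<m}"
        obtain p where p: "p permutes {..<m}"
          "\<forall>f J'. wedge (map (\<lambda>k. f (ii k)) [0..<m]) J' = of_int (sign p) * wedge (map f (srt ?S)) J'"
          using wedge_perm_sorted[OF inj] by blast
        have S: "?S \<subseteq> {..<n}" "card ?S = m" using ii inj by (auto simp: card_image)
        have nc: "\<not> ({..<a} \<subseteq> ?S \<and> ?S \<subseteq> {..<a + b})"
        proof
          assume c: "{..<a} \<subseteq> ?S \<and> ?S \<subseteq> {..<a + b}"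
          then have "a \<le> m" using S by (metis card_lessThan card_mono finite_imageI finite_lessThan)
          moreover have "m \<le> a + b" using c S by (metis card_lessThan card_mono finite_lessThan)
          ultimately show False using out by simp
        qed
        have "wedge (vecsB C) = (\<lambda>J'. of_int (sign p) * wedge (map (\<lambda>i. B ! i) (srt ?S)) J')"
          unfolding vecsB_dl[OF ii] using p(2) by blast
        then have "mat_apply n m L (wedge (vecsB C)) J = of_int (sign p) * mat_apply n m L (wedge (map (\<lambda>i. B ! i) (srt ?S))) J"
          using mat_apply_scale by simp
        also have "mat_apply n m L (wedge (map (\<lambda>i. B ! i) (srt ?S))) = (\<lambda>_. 0)"
          using act S nc by auto
        finally show ?thesis by simp
      qed
    qed simp
    then show ?thesis using LJI by simp
  qed
qed

end


context hsetup
begin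

lemma vecsT_dl:
  fixes C :: "nat \<Rightarrow> nat \<Rightarrow> complex"
  assumes "\<forall>k<m. C k = dl (ii k) \<and> ii k < n"
  shows "vecsT C = map (\<lambda>k. if ii k < bnd k then B' ! ii k else (\<lambda>_. 0)) [0..<m]"
proof (rule nth_equalityI)
  fix k assume "k < length (vecsT C)"
  then have k: "k < m" by simp
  have "(\<Sum>i<bnd k. dl (ii k) i * (B' ! i) x) = (if ii k < bnd k then B' ! ii k else (\<lambda>_. 0)) x" for x
  proof (cases "ii k < bnd k")
    case True
    then show ?thesis by (subst sum.remove[of _ "ii k"]) (auto intro!: sum.neutral)
  next
    case False
    then show ?thesis by (auto intro!: sum.neutral)
  qed
  then have "(\<lambda>x. \<Sum>i<bnd k. dl (ii k) i * (B' ! i) x) = (if ii k < bnd k then B' ! ii k else (\<lambda>_. 0))"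
    by auto
  then show "vecsT C ! k = map (\<lambda>k. if ii k < bnd k then B' ! ii k else (\<lambda>_. 0)) [0..<m] ! k"
    using assms k by (simp add: vecsT_def)
qed simp

definition DD :: "nat \<Rightarrow> nat set" where "DD k = (if k < a then {..<n} else {a..<n})"

lemma base_main:
  fixes C :: "nat \<Rightarrow> nat \<Rightarrow> complex"
  assumes am: "a \<le> m" and ii: "\<forall>k<m. C k = dl (ii k) \<and> ii k \<in> DD k"
  shows "mat_apply n m L (wedge (vecsB C)) J - wedge (vecsT C) J = 0"
proof -
  have ii': "\<forall>k<m. C k = dl (ii k) \<and> ii k < n" using ii by (auto simp: DD_def split: if_splits)
  have iia: "a \<le> ii k" if "a \<le> k" "k < m" for k using ii that by (auto simp: DD_def)
  have vT: "vecsT C = map (\<lambda>k. if ii k < bnd k then B' ! ii k else (\<lambda>_. 0)) [0..<m]"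
    by (rule vecsT_dl[OF ii'])
  have T0: "wedge (vecsT C) J = 0" if k: "k < m" "bnd k \<le> ii k" for k
    by (rule W_zero[of k]) (use k vT in auto)
  show ?thesis
  proof (cases "inj_on ii {..<m}")
    case False
    then obtain k k' where kk: "k < m" "k' < m" "k \<noteq> k'" "ii k = ii k'"
      unfolding inj_on_def by auto
    have "wedge (vecsT C) J = 0"
    proof (cases "bnd k = bnd k'")
      case True
      show ?thesis by (rule W_rep[of k _ k']) (use kk vT True in auto)
    next
      case False
      then have "(k < a \<and> a \<le> k') \<or> (k' < a \<and> a \<le> k)" by (auto simp: bnd_def split: if_splits)
      then show ?thesis
      proof
        assume h: "k < a \<and> a \<le> k'"
        then have "bnd k \<le> ii k" using iia[of k'] kk by (simp add: bnd_def)
        then show ?thesis using T0 kk by blast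
      next
        assume h: "k' < a \<and> a \<le> k"
        then have "bnd k' \<le> ii k'" using iia[of k] kk by (simp add: bnd_def)
        then show ?thesis using T0 kk by blast
      qed
    qed
    then show ?thesis using Th1_noninj[OF ii' False] by simp
  next
    case inj: True
    let ?S = "ii ` {..<m}"
    obtain p where p: "p permutes {..<m}"
      "\<forall>f J'. wedge (map (\<lambda>k. f (ii k)) [0..<m]) J' = of_int (sign p) * wedge (map f (srt ?S)) J'"
      using wedge_perm_sorted[OF inj] by blast
    have S: "?S \<subseteq> {..<n}" "card ?S = m" using ii' inj by (auto simp: card_image)
    have "wedge (vecsB C) = (\<lambda>J'. of_int (sign p) * wedge (map (\<lambda>i. B ! i) (srt ?S)) J')"
      unfolding vecsB_dl[OF ii'] using p(2) by blast
    then have th1: "mat_apply n m L (wedge (vecsB C)) J = of_int (sign p) * mat_apply n m L (wedge (map (\<lambda>i. B ! i) (srt ?S))) J"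
      using mat_apply_scale by simp
    have inja: "inj_on ii {..<a}" using inj am by (meson inj_on_subset lessThan_subset_iff)
    have ca: "card (ii ` {..<a}) = a" using inja by (simp add: card_image)
    show ?thesis
    proof (cases "{..<a} \<subseteq> ?S \<and> ?S \<subseteq> {..<a + b}")
      case True
      have sub: "{..<a} \<subseteq> ii ` {..<a}"
      proof
        fix j assume j: "j \<in> {..<a}"
        then obtain k where k: "k < m" "ii k = j" using True by auto
        then have "k < a" using iia[of k] j by (cases "a \<le> k") auto
        then show "j \<in> ii ` {..<a}" using k by auto
      qed
      have eqa: "ii ` {..<a} = {..<a}"
        by (rule card_subset_eq[symmetric]) (use sub ca in auto)
      have lt: "ii k < bnd k" if k: "k < m" for k
      proof (cases "k < a")
        case True
        then show ?thesis using eqa by (auto simp: bnd_def)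
      next
        case False
        then show ?thesis using True k by (auto simp: bnd_def)
      qed
      have "vecsT C = map (\<lambda>k. (Fs @ Gs) ! ii k) [0..<m]"
        unfolding vT
      proof (rule map_cong[OF refl])
        fix k assume "k \<in> set [0..<m]"
        then have k: "k < m" by simp
        have "ii k < a + b" using lt[OF k] by (simp add: bnd_def split: if_splits)
        then have "B' ! ii k = (Fs @ Gs) ! ii k" using lf lg by (auto simp: nth_append)
        then show "(if ii k < bnd k then B' ! ii k else (\<lambda>_. 0)) = (Fs @ Gs) ! ii k" using lt[OF k] by simp
      qed
      then have th2: "wedge (vecsT C) J = of_int (sign p) * wedge (map (\<lambda>i. (Fs @ Gs) ! i) (srt ?S)) J"
        using p(2) by simp
      have "mat_apply n m L (wedge (map (\<lambda>i. B ! i) (srt ?S))) = wedge (map (\<lambda>i. (Fs @ Gs) ! i) (srt ?S))"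
        using act S True by auto
      then show ?thesis using th1 th2 by simp
    next
      case False
      have "mat_apply n m L (wedge (map (\<lambda>i. B ! i) (srt ?S))) = (\<lambda>_. 0)"
        using act S False by auto
      then have z1: "mat_apply n m L (wedge (vecsB C)) J = 0" using th1 by simp
      have "\<exists>k<m. bnd k \<le> ii k"
      proof (cases "?S \<subseteq> {..<a + b}")
        case False
        then obtain y where y: "y \<in> ?S" "y \<notin> {..<a + b}" by blast
        then obtain k where "k < m" "y = ii k" by blast
        then have "k < m" "a + b \<le> ii k" using y by auto
        then show ?thesis by (intro exI[of _ k]) (auto simp: bnd_def)
      next
        case True
        with False have "\<not> {..<a} \<subseteq> ?S" by simp
        then obtain j where j: "j < a" "j \<notin> ?S" by auto
        show ?thesis
        proof (rule ccontr)
          assume "\<not> (\<exists>k<m. bnd k \<le> ii k)"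
          then have nb: "\<not> bnd k \<le> ii k" if "k < a" for k using that am by auto
          have "ii k < a" if "k < a" for k
          proof -
            have "\<not> a \<le> ii k" using nb[OF that] that by (simp add: bnd_def)
            then show ?thesis by simp
          qed
          then have "ii ` {..<a} \<subseteq> {..<a}" by auto
          then have "ii ` {..<a} = {..<a}" using ca by (simp add: card_subset_eq)
          then have "j \<in> ii ` {..<a}" using j by auto
          moreover have "ii ` {..<a} \<subseteq> ?S" using am by auto
          ultimately have "j \<in> ?S" by blast
          then show False using j by simp
        qed
      qed
      then show ?thesis using T0 z1 by auto
    qed
  qed
qed

end


lemma sum_nz_ex: "(\<Sum>i\<in>A. f i) \<noteq> (0::complex) \<Longrightarrow> \<exists>i\<in>A. f i \<noteq> 0"
  by (meson sum.neutral)

context hsetup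
begin

lemma L_main:
  assumes am: "a \<le> m" and mab: "m \<le> a + b"
  shows "\<exists>d. d \<noteq> 0 \<and> (\<forall>J. L J {1..m} = (if J = {1..m} then d else 0))"
proof -
  have a0: "a = s0" by (rule a_eq)
  have ab: "a + b = s1" by (rule ab_eq)
  have mn: "m \<le> n" using mab ab s1n by simp
  define ka where "ka k = (SOME c. evec (Suc k) = (\<lambda>x'. \<Sum>i<n. c i * (B ! i) x'))" for k
  define ga where "ga k = (SOME c. \<forall>x'. evec (Suc k) x' = (\<Sum>i<n. c i * (if a \<le> i then (B ! i) x' else 0)) \<and>
                 evec (Suc k) x' = (\<Sum>i<n. c i * (if i < a + b then (B' ! i) x' else 0)))" for k
  have ka: "evec (Suc k) = (\<lambda>x'. \<Sum>i<n. ka k i * (B ! i) x')" if "k < a" for k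
  proof -
    have "\<exists>c. evec (Suc k) = (\<lambda>x'. \<Sum>i<n. c i * (B ! i) x')" using spanB[of "Suc k"] that am mn by simp
    then show ?thesis unfolding ka_def by (rule someI_ex)
  qed
  have ga: "\<forall>x'. evec (Suc k) x' = (\<Sum>i<n. ga k i * (if a \<le> i then (B ! i) x' else 0)) \<and>
                 evec (Suc k) x' = (\<Sum>i<n. ga k i * (if i < a + b then (B' ! i) x' else 0))"
    if "a \<le> k" "k < m" for k
  proof -
    have "\<exists>c. \<forall>x'. evec (Suc k) x' = (\<Sum>i<n. c i * (if a \<le> i then (B ! i) x' else 0)) \<and>
                 evec (Suc k) x' = (\<Sum>i<n. c i * (if i < a + b then (B' ! i) x' else 0))"
      using E_mid[of "Suc k"] that a0 ab mab by simp
    then show ?thesis unfolding ga_def by (rule someI_ex)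
  qed
  define C0 where "C0 k i = (if k < a then (if i < n then ka k i else 0) else (if a \<le> i \<and> i < n then ga k i else 0))" for k i
  have srt1: "srt {1..m} = [1..<Suc m]"
    by (simp add: atLeastLessThanSuc_atLeastAtMost[symmetric] del: upt_Suc)
  have vC0: "vecsB C0 = map evec (srt {1..m})"
  proof (rule nth_equalityI)
    show "length (vecsB C0) = length (map evec (srt {1..m}))" by simp
  next
    fix k assume "k < length (vecsB C0)"
    then have k: "k < m" by simp
    have "(\<lambda>x. \<Sum>i<n. C0 k i * (B ! i) x) = evec (Suc k)"
    proof (cases "k < a")
      case True
      then show ?thesis using ka[OF True] by (simp add: C0_def)
    next
      case False
      have "(\<Sum>i<n. C0 k i * (B ! i) x) = evec (Suc k) x" for x
      proof -
        have "(\<Sum>i<n. C0 k i * (B ! i) x) = (\<Sum>i<n. ga k i * (if a \<le> i then (B ! i) x else 0))"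
          using False by (intro sum.cong) (auto simp: C0_def)
        then show ?thesis using ga[of k] False k by simp
      qed
      then show ?thesis by auto
    qed
    then show "vecsB C0 ! k = map evec (srt {1..m}) ! k"
      using k srt1 by (simp add: vecsB_def del: upt_Suc)
  qed
  have Im: "{1..m} \<in> msub n m" using mn by (simp add: msub_def)
  have LJ: "L J {1..m} = mat_apply n m L (wedge (vecsB C0)) J" for J
  proof -
    have "L J {1..m} = mat_apply n m L (\<lambda>I'. if I' = {1..m} then 1 else 0) J"
      unfolding mat_apply_def using Im fin_msub by (simp add: if_distrib sum.delta cong: if_cong)
    also have "(\<lambda>I'. if I' = {1..m} then 1 else (0::complex)) = wedge (vecsB C0)"
      unfolding vC0 using W_std[of "{1..m}"] by auto
    finally show ?thesis .
  qed
  have MV: "mat_apply n m L (wedge (vecsB C0)) J - wedge (vecsT C0) J = 0" for J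
  proof (rule multilin_vanish[where D=DD and m=m and Th="\<lambda>C. mat_apply n m L (wedge (vecsB C)) J - wedge (vecsT C) J"])
    show "\<And>k. k < m \<Longrightarrow> finite (DD k)" by (simp add: DD_def)
  next
    fix C :: "nat \<Rightarrow> nat \<Rightarrow> complex" and k r assume k: "k < m"
    have f: "finite (DD k)" by (simp add: DD_def)
    show "mat_apply n m L (wedge (vecsB (C(k := \<lambda>i. \<Sum>j\<in>DD k. r j * dl j i)))) J - wedge (vecsT (C(k := \<lambda>i. \<Sum>j\<in>DD k. r j * dl j i))) J =
        (\<Sum>j\<in>DD k. r j * (mat_apply n m L (wedge (vecsB (C(k := dl j)))) J - wedge (vecsT (C(k := dl j))) J))"
      unfolding Th1_lin[OF k f] vecsT_lin[OF k f] by (simp add: right_diff_distrib sum_subtractf)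
  next
    fix C :: "nat \<Rightarrow> nat \<Rightarrow> complex"
    assume "\<forall>k<m. \<exists>j\<in>DD k. C k = dl j"
    then obtain ii where ii: "\<forall>k<m. C k = dl (ii k) \<and> ii k \<in> DD k" by metis
    show "mat_apply n m L (wedge (vecsB C)) J - wedge (vecsT C) J = 0" by (rule base_main[OF am ii])
  next
    show "\<forall>k<m. \<forall>i. i \<notin> DD k \<longrightarrow> C0 k i = 0" by (auto simp: DD_def C0_def)
  qed
  define T where "T k = vecsT C0 ! k" for k
  have Tlo: "T k = (\<lambda>x. \<Sum>i<a. ka k i * (B' ! i) x)" if "k < a" for k
  proof -
    have "T k = (\<lambda>x. \<Sum>i<bnd k. C0 k i * (B' ! i) x)" using that am by (simp add: T_def vecsT_def)
    also have "\<dots> = (\<lambda>x. \<Sum>i<a. ka k i * (B' ! i) x)"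
      using that am mn by (auto simp: bnd_def C0_def intro!: sum.cong)
    finally show ?thesis .
  qed
  have Thi: "T k x = evec (Suc k) x - (\<Sum>i<a. ga k i * (B' ! i) x)" if k: "a \<le> k" "k < m" for k x
  proof -
    have T1: "T k x = (\<Sum>i<a + b. (if a \<le> i then ga k i else 0) * (B' ! i) x)"
      using k mab ab s1n by (auto simp: T_def vecsT_def bnd_def C0_def intro!: sum.cong)
    have "evec (Suc k) x = (\<Sum>i<n. ga k i * (if i < a + b then (B' ! i) x else 0))" using ga[OF k] by blast
    also have "\<dots> = (\<Sum>i\<in>{i. i < n \<and> i < a + b}. ga k i * (B' ! i) x)" by (rule sum_if_filter)
    also have "{i. i < n \<and> i < a + b} = {..<a + b}" using ab s1n by auto
    finally have e: "evec (Suc k) x = (\<Sum>i<a + b. ga k i * (B' ! i) x)" .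
    have "(\<Sum>i<a. ga k i * (B' ! i) x) = (\<Sum>i<a + b. (if i < a then ga k i else 0) * (B' ! i) x)"
      by (rule sum.mono_neutral_cong_left) auto
    then have "T k x + (\<Sum>i<a. ga k i * (B' ! i) x) = (\<Sum>i<a + b. ((if a \<le> i then ga k i else 0) + (if i < a then ga k i else 0)) * (B' ! i) x)"
      unfolding T1 by (simp add: sum.distrib distrib_right)
    also have "\<dots> = (\<Sum>i<a + b. ga k i * (B' ! i) x)" by (intro sum.cong) auto
    finally show ?thesis using e by (simp add: algebra_simps)
  qed
  have Fz: "(B' ! i) x = 0" if "i < a" "\<not> (0 < x \<and> x \<le> a)" for i x
    using F_supp[of i x] that a0 by auto
  have lo: "0 < x \<and> x \<le> a" if k: "k < a" and nz: "T k x \<noteq> 0" for k x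
  proof -
    obtain i where "i < a" "ka k i * (B' ! i) x \<noteq> 0" using k nz Tlo[of k] sum_nz_ex[of "\<lambda>i. ka k i * (B' ! i) x" "{..<a}"] by auto
    then show ?thesis using Fz[of i x] by (metis mult_zero_right)
  qed
  have hi: "0 < x \<and> x \<le> a" if h4: "a \<le> k" "k < m" "x \<noteq> Suc k" "T k x \<noteq> 0" for k x
  proof -
    have "(\<Sum>i<a. ga k i * (B' ! i) x) \<noteq> 0" using Thi[OF h4(1,2), of x] h4(3,4) by (simp add: evec_def)
    then obtain i where "i < a" "ga k i * (B' ! i) x \<noteq> 0" using sum_nz_ex[of "\<lambda>i. ga k i * (B' ! i) x" "{..<a}"] by auto
    then show ?thesis using Fz[of i x] by (metis mult_zero_right)
  qed
  have hi1: "T k (Suc k) = 1" if "a \<le> k" "k < m" for k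
    using Thi[OF that, of "Suc k"] Fz that by (simp add: evec_def)
  define d where "d = (\<Sum>p | p permutes {..<a}. of_int (sign p) * (\<Prod>k<a. T k (Suc (p k))))"
  have W: "wedge (vecsT C0) J = (if J = {1..m} then d else 0)" for J
    unfolding d_def T_def
    by (rule block_wedge[OF am]) (use lo hi hi1 in \<open>simp_all add: T_def\<close>)
  have "d \<noteq> 0"
    unfolding d_def
  proof (rule det_nonzero)
    show "\<And>k x. k < a \<Longrightarrow> T k x \<noteq> 0 \<Longrightarrow> 0 < x \<and> x \<le> a" using lo by blast
  next
    fix lam assume h: "\<forall>x. (\<Sum>k<a. lam k * T k x) = 0"
    define mu where "mu i = (\<Sum>k<a. lam k * ka k i)" for i
    have "(\<Sum>k<a. lam k * T k x) = (\<Sum>i<a. mu i * (B' ! i) x)" for x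
    proof -
      have "(\<Sum>k<a. lam k * T k x) = (\<Sum>k<a. \<Sum>i<a. lam k * ka k i * (B' ! i) x)"
        using Tlo by (simp add: sum_distrib_left mult.assoc)
      also have "\<dots> = (\<Sum>i<a. \<Sum>k<a. lam k * ka k i * (B' ! i) x)" by (rule sum.swap)
      also have "\<dots> = (\<Sum>i<a. mu i * (B' ! i) x)" unfolding mu_def by (simp add: sum_distrib_right)
      finally show ?thesis .
    qed
    then have "\<forall>x. (\<Sum>i\<in>{..<a}. mu i * (B' ! i) x) = 0" using h by simp
    then have mu0: "mu i = 0" if "i < a" for i
      using lin_indep_sub[OF indB', of mu "{..<a}" i] that lenB' am mn by auto
    show "\<forall>k<a. lam k = 0"
    proof (intro allI impI)
      fix k0 assume k0: "k0 < a"
      have "(\<Sum>k<a. lam k * evec (Suc k) (Suc k0)) = lam k0"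
        using k0 by (subst sum.remove[of _ k0]) (auto simp: evec_def intro!: sum.neutral)
      also have "(\<Sum>k<a. lam k * evec (Suc k) (Suc k0)) = (\<Sum>k<a. lam k * (\<Sum>i<n. ka k i * (B ! i) (Suc k0)))"
        using ka by (intro sum.cong) auto
      also have "\<dots> = (\<Sum>k<a. \<Sum>i<n. lam k * ka k i * (B ! i) (Suc k0))"
        by (simp add: sum_distrib_left mult.assoc)
      also have "\<dots> = (\<Sum>i<n. \<Sum>k<a. lam k * ka k i * (B ! i) (Suc k0))" by (rule sum.swap)
      also have "\<dots> = (\<Sum>i<n. mu i * (B ! i) (Suc k0))" unfolding mu_def by (simp add: sum_distrib_right)
      also have "\<dots> = 0"
      proof (rule sum.neutral, rule ballI)
        fix i assume i: "i \<in> {..<n}"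
        show "mu i * (B ! i) (Suc k0) = 0"
        proof (cases "i < a")
          case True then show ?thesis using mu0 by simp
        next
          case False
          then have "(B ! i) (Suc k0) = 0" using GH_supp[of i "Suc k0"] i k0 a0 by auto
          then show ?thesis by simp
        qed
      qed
      finally show "lam k0 = 0" by simp
    qed
  qed
  moreover have "L J {1..m} = (if J = {1..m} then d else 0)" for J
    using LJ[of J] MV[of J] W[of J] by simp
  ultimately show ?thesis by blast
qed

end


context hsetup
begin
lemma L_key:
  assumes "L \<noteq> (\<lambda>_ _. 0)"
  shows "\<exists>d. d \<noteq> 0 \<and> (\<forall>J. L J {1..m} = (if J = {1..m} then d else 0))"
  using L_main L_zero_out assms by blast
end

lemma key_canon:
  assumes s: "s0 \<le> s1" "s1 \<le> n"
    and lr: "lam_rep n (lspan (map (cvec s0 s1) [1..<n+1])) m L" and nz: "L \<noteq> (\<lambda>_ _. 0)"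
  shows "\<exists>d. d \<noteq> 0 \<and> (\<forall>J. L J {1..m} = (if J = {1..m} then d else 0))"
proof -
  obtain fs gs hs Fs Gs Hs where
    h: "is_basis n (fs @ gs @ hs)" "is_basis n (Fs @ Gs @ Hs)"
       "length fs = length Fs" "length gs = length Gs" "length hs = length Hs"
       "lspan (map (cvec s0 s1) [1..<n+1]) = lspan (map (dsum (\<lambda>_. 0)) Fs @ map2 dsum gs Gs @ map (\<lambda>h. dsum h (\<lambda>_. 0)) hs)"
       "is_op n m L"
       "\<forall>S. S \<subseteq> {..<n} \<and> card S = m \<longrightarrow>
          mat_apply n m L (wedge (map (\<lambda>i. (fs @ gs @ hs) ! i) (sorted_list_of_set S))) =
            (if {..<length fs} \<subseteq> S \<and> S \<subseteq> {..<length fs + length gs}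
             then wedge (map (\<lambda>i. (Fs @ Gs) ! i) (sorted_list_of_set S))
             else (\<lambda>_. 0))"
    using lr unfolding lam_rep_def by (elim exE conjE) (rule that; assumption)
  interpret hsetup n s0 s1 m L fs gs hs Fs Gs Hs
    by (rule hsetup.intro[OF s(1) s(2) h(1) h(2) h(3) h(4) h(5) h(6) h(7) h(8)])
  show ?thesis using L_key[OF nz] .
qed

lemma take_mono_sum: "i \<le> j \<Longrightarrow> sum_list (take i (xs::nat list)) \<le> sum_list (take j xs)"
proof -
  assume "i \<le> j"
  then have "take j xs = take i xs @ take (j - i) (drop i xs)" by (metis le_add_diff_inverse take_add)
  then show ?thesis by simp
qed

lemma take_le_sum: "sum_list (take j (xs::nat list)) \<le> sum_list xs"
  by (metis append_take_drop_id le_add1 sum_list_append)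

lemma canon_mem:
  assumes "P \<in> set (canon_hinge n alpha)" "sum_list alpha = n"
  shows "\<exists>s0 s1. s0 \<le> s1 \<and> s1 \<le> n \<and> P = lspan (map (cvec s0 s1) [1..<n+1])"
proof -
  obtain j where "P = lspan (map (cvec (psum alpha (j - 1)) (psum alpha j)) [1..<n+1])"
    using assms(1) unfolding canon_hinge_def by auto
  moreover have "psum alpha (j - 1) \<le> psum alpha j" unfolding psum_def by (rule take_mono_sum) simp
  moreover have "psum alpha j \<le> n" unfolding psum_def using take_le_sum assms(2) by metis
  ultimately show ?thesis by blast
qed

lemma A_form:
  assumes lo: "lies_over_nondeg n A (canon_hinge n alpha)" and sa: "sum_list alpha = n" and m: "m \<le> n"
  shows "\<exists>c. c \<noteq> 0 \<and> (\<forall>J. A m J {1..m} = c * (if J = {1..m} then 1 else 0))"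
proof -
  obtain P L c where P: "P \<in> set (canon_hinge n alpha)" and lr: "lam_rep n P m L" and nz: "L \<noteq> (\<lambda>_ _. 0)"
    and c: "c \<noteq> 0" "A m = (\<lambda>J I. c * L J I)"
    using lo m unfolding lies_over_nondeg_def by blast
  obtain s0 s1 where s: "s0 \<le> s1" "s1 \<le> n" "P = lspan (map (cvec s0 s1) [1..<n+1])"
    using canon_mem[OF P sa] by blast
  obtain d where d: "d \<noteq> 0" "\<forall>J. L J {1..m} = (if J = {1..m} then d else 0)"
    using key_canon[OF s(1,2) _ nz] lr s(3) by blast
  show ?thesis
    by (rule exI[of _ "c * d"]) (use c d in auto)
qed

lemma slots_range: "j \<in> set (slots n nu) \<Longrightarrow> 1 \<le> j \<and> j \<le> n"
  by (auto simp: slots_def)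

lemma fin_tidx: "finite (tidx n nu)"
proof -
  have "tidx n nu \<subseteq> {xs. set xs \<subseteq> Pow {1..n} \<and> length xs = length (slots n nu)}"
    by (fastforce simp: tidx_def msub_def in_set_conv_nth)
  then show ?thesis by (rule finite_subset) (simp add: finite_lists_length_eq)
qed

lemma prod_ifs:
  "(\<Prod>i<(L::nat). (c i :: complex) * (if P i then 1 else 0)) = (\<Prod>i<L. c i) * (if \<forall>i<L. P i then 1 else 0)"
  by (auto simp: prod.distrib intro: prod_zero)

lemma rnu_Xi:
  fixes M :: "nat \<Rightarrow> nat set \<Rightarrow> nat set \<Rightarrow> complex"
  assumes hM: "\<And>j J. 1 \<le> j \<Longrightarrow> j \<le> n \<Longrightarrow> M j J {1..j} = cc j * (if J = {1..j} then 1 else 0)"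
  shows "rnu n nu M (Xi n nu) = (\<lambda>Is. (\<Prod>i<length (slots n nu). cc (slots n nu ! i)) * Xi n nu Is)"
proof
  fix Js
  let ?sl = "slots n nu"
  let ?I0 = "map (\<lambda>j. {1..j}) ?sl"
  have rng: "1 \<le> ?sl ! i \<and> ?sl ! i \<le> n" if "i < length ?sl" for i
    using slots_range that nth_mem by blast
  have I0: "?I0 \<in> tidx n nu"
    unfolding tidx_def msub_def using rng by auto
  show "rnu n nu M (Xi n nu) Js = (\<Prod>i<length ?sl. cc (?sl ! i)) * Xi n nu Js"
  proof (cases "Js \<in> tidx n nu")
    case False
    then have "Js \<noteq> ?I0" using I0 by auto
    then show ?thesis using False by (simp add: rnu_def Xi_def)
  next
    case True
    have "rnu n nu M (Xi n nu) Js = (\<Sum>Is\<in>tidx n nu. (\<Prod>i<length ?sl. M (?sl ! i) (Js ! i) (Is ! i)) * (if Is = ?I0 then 1 else 0))"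
      using True by (simp add: rnu_def Xi_def)
    also have "\<dots> = (\<Prod>i<length ?sl. M (?sl ! i) (Js ! i) (?I0 ! i))"
      using I0 fin_tidx by (simp add: if_distrib sum.delta cong: if_cong)
    also have "\<dots> = (\<Prod>i<length ?sl. cc (?sl ! i) * (if Js ! i = ?I0 ! i then 1 else 0))"
      using hM rng by (intro prod.cong) auto
    also have "\<dots> = (\<Prod>i<length ?sl. cc (?sl ! i)) * (if \<forall>i<length ?sl. Js ! i = ?I0 ! i then 1 else 0)"
      by (rule prod_ifs)
    also have "(\<forall>i<length ?sl. Js ! i = ?I0 ! i) \<longleftrightarrow> Js = ?I0"
      using True by (auto simp: tidx_def intro: nth_equalityI)
    finally show ?thesis by (simp add: Xi_def)
  qed
qed

definition g0 :: "nat \<Rightarrow> nat \<Rightarrow> nat \<Rightarrow> complex" where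
  "g0 n = (\<lambda>r i. if r = i \<and> r \<in> {1..n} then 1 else 0)"

lemma gl_g0: "gl n (g0 n)"
proof -
  have id: "\<forall>r i. r \<in> {1..n} \<longrightarrow> i \<in> {1..n} \<longrightarrow> (\<Sum>l = 1..n. g0 n r l * g0 n l i) = (if r = i then 1 else 0)"
  proof (intro allI impI)
    fix r i assume ri: "r \<in> {1..n}" "i \<in> {1..n}"
    have "(\<Sum>l = 1..n. g0 n r l * g0 n l i) = (\<Sum>l = 1..n. if l = r then (if r = i then 1 else 0) else 0)"
      by (rule sum.cong) (auto simp: g0_def)
    also have "\<dots> = (if r = i then 1 else 0)" using ri by simp
    finally show "(\<Sum>l = 1..n. g0 n r l * g0 n l i) = (if r = i then 1 else 0)" .
  qed
  have sup: "\<forall>r i. g0 n r i \<noteq> 0 \<longrightarrow> r \<in> {1..n} \<and> i \<in> {1..n}" by (auto simp: g0_def split: if_splits)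
  show ?thesis unfolding gl_def using sup id by blast
qed

lemma cha_g0: "1 \<le> j \<Longrightarrow> j \<le> n \<Longrightarrow> cha n (g0 n) j J {1..j} = 1 * (if J = {1..j} then 1 else 0)"
proof -
  assume j: "1 \<le> j" "j \<le> n"
  have Im: "{1..j} \<in> msub n j" using j by (simp add: msub_def)
  have vecs: "map (\<lambda>i. \<lambda>r. g0 n r i) (srt {1..j}) = map evec (srt {1..j})"
    using j by (auto simp: g0_def evec_def fun_eq_iff intro!: map_cong)
  show ?thesis
  proof (cases "J \<in> msub n j")
    case True
    have "cha n (g0 n) j J {1..j} = wedge (map (\<lambda>i. \<lambda>r. g0 n r i) (srt {1..j})) J"
      using True Im by (simp add: cha_def)
    also have "\<dots> = wedge (map evec (srt {1..j})) J" by (simp only: vecs)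
    also have "\<dots> = (if J = {1..j} then 1 else 0)" by (rule W_std) simp
    finally show ?thesis by simp
  next
    case False
    then have "J \<noteq> {1..j}" using Im by auto
    then show ?thesis using False by (simp add: cha_def)
  qed
qed

lemma Xi_in: "Xi n nu \<in> Hnu n nu"
proof -
  have "rnu n nu (cha n (g0 n)) (Xi n nu) = (\<lambda>Is. (\<Prod>i<length (slots n nu). 1) * Xi n nu Is)"
    by (rule rnu_Xi) (rule cha_g0)
  then have e: "rnu n nu (cha n (g0 n)) (Xi n nu) = Xi n nu" by simp
  have "Xi n nu \<in> {rnu n nu (cha n g) (Xi n nu) | g. gl n g}"
    unfolding mem_Collect_eq by (rule exI[of _ "g0 n"]) (use e gl_g0 in simp)
  then have S: "{Xi n nu} \<subseteq> {rnu n nu (cha n g) (Xi n nu) | g. gl n g}" by simp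
  have E: "Xi n nu = (\<lambda>x. \<Sum>w\<in>{Xi n nu}. 1 * w x)" by simp
  show ?thesis unfolding Hnu_def cspan_def mem_Collect_eq
    by (rule exI[of _ "{Xi n nu}"], rule exI[of _ "\<lambda>_. 1"]) (use S E in simp)
qed

theorem lemma2p14:
  fixes n :: nat and alpha :: "nat list" and nu :: "nat \<Rightarrow> nat"
    and A :: "nat \<Rightarrow> nat set \<Rightarrow> nat set \<Rightarrow> complex"
  assumes "\<forall>a\<in>set alpha. 0 < a"
    and "sum_list alpha = n"
    and "\<forall>j\<in>{1..<n}. nu (Suc j) \<le> nu j"
    and "lies_over_nondeg n A (canon_hinge n alpha)"
  shows "\<exists>c::complex. c \<noteq> 0 \<and> rho n nu A (Xi n nu) = (\<lambda>Is. c * Xi n nu Is)"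
proof -
  define cc where "cc j = (SOME c. c \<noteq> 0 \<and> (\<forall>J. A j J {1..j} = c * (if J = {1..j} then 1 else 0)))" for j
  have cc: "cc j \<noteq> 0 \<and> (\<forall>J. A j J {1..j} = cc j * (if J = {1..j} then 1 else 0))" if "j \<le> n" for j
    unfolding cc_def by (rule someI_ex) (rule A_form[OF assms(4) assms(2) that])
  have r: "rnu n nu A (Xi n nu) = (\<lambda>Is. (\<Prod>i<length (slots n nu). cc (slots n nu ! i)) * Xi n nu Is)"
    by (rule rnu_Xi) (use cc in blast)
  have nz: "(\<Prod>i<length (slots n nu). cc (slots n nu ! i)) \<noteq> 0"
  proof -
    have "cc (slots n nu ! i) \<noteq> 0" if "i < length (slots n nu)" for i
      using cc slots_range that nth_mem by blast
    then show ?thesis by simp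
  qed
  have "rho n nu A (Xi n nu) = rnu n nu A (Xi n nu)" using Xi_in by (simp add: rho_def)
  then show ?thesis
    by (intro exI[of _ "\<Prod>i<length (slots n nu). cc (slots n nu ! i)"]) (use r nz in simp)
qed


end
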